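(* For $\mathcal{A}$ a thin concurrent game, the triple $(\mathrm{CC}_{\tilde{A}}, \mathrm{CC}_{l_A}, \mathrm{CC}_{r_A})$ is a symmetry and makes $\mathrm{CC}_A$ an essp, written $\mathrm{CC}_\mathcal{A}$. Moreover, $cc_{\mathcal{A}} : \mathrm{CC}_\mathcal{A} \to \mathcal{A}^\perp \parallel \mathcal{A}$ is a $\sim$-strategy.
   Context: Event structures with polarities (esp), configurations $\mathcal{C}(E)$ (finite consistent down-closed sets), and immediate causality $e \rightarrow e'$ ($e<e'$ with nothing strictly between). An essp is an esp $A$ with a symmetry, i.e. an event structure $\tilde A$ with open maps $l_A,r_A:\tilde A\to A$ that are jointly monic and form an equivalence relation; equivalently an isomorphism family $\mathbb{S}_A$ of bijections between configurations (closed under identities, composition, inverse, restriction, and with the extension property). A thin concurrent game (tcg) is an essp which is thin (if $\theta\in\mathbb{S}_A$ has two positive extensions in $\mathbb{S}_A$ with compatible domains, their union is in $\mathbb{S}_A$), race-preserving ($l_A$ preserves races between a negative and a positive extension), and has receptive thin sub-symmetries of $\mathcal{A}^\perp$ and $\mathcal{A}$. For an esp $A$, the copycat esp $\mathrm{CC}_A$ has events those of $A^\perp\parallel A$, causality the transitive closure of that of $A^\perp\parallel A$ together with $(1,a) \rightarrow (2,a)$ for $a$ positive in $A^\perp$... precisely $(i,a)\rightarrow(3-i,a)$ whenever $(i,a)$ is negative in $A^\perp\parallel A$ ... i.e. each positive copy of $a$ depends on the opposite negative copy, and $cc_A:\mathrm{CC}_A\to A^\perp\parallel A$ is the identity on events;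 $\mathrm{CC}$ extends to a functor on esps by $\mathrm{CC}_f(i,a)=(i,f a)$. A $\sim$-strategy $\sigma:\mathcal{S}\to\mathcal{A}$ is a map of essps which is courteous (if $s_1 \rightarrow s_2$ with $\mathrm{pol}(s_1)=+$ or $\mathrm{pol}(s_2)=-$ then $\sigma s_1 \rightarrow \sigma s_2$), strong-receptive (any extension of $\sigma\theta$, $\theta\in\mathbb{S}_S$, by a pair of negative events lifts uniquely to an extension of $\theta$ in $\mathbb{S}_S$), and thin ($\mathcal{S}$ thin). *)

theory Defs
  imports Main
begin

text \<open>An event structure with polarity: events, causal order, consistency
  (a set of finite sets of events) and polarity (True = positive, False = negative).
  For plain event structures the polarity field is ignored.\<close>

record 'e esp =
  ev  :: "'e set"
  leq :: "'e \<Rightarrow> 'e \<Rightarrow> bool"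
  con :: "'e set set"
  pol :: "'e \<Rightarrow> bool"

definition is_es :: "'e esp \<Rightarrow> bool" where
  "is_es E \<longleftrightarrow>
     (\<forall>a b. leq E a b \<longrightarrow> a \<in> ev E \<and> b \<in> ev E) \<and>
     (\<forall>a\<in>ev E. leq E a a) \<and>
     (\<forall>a b. leq E a b \<and> leq E b a \<longrightarrow> a = b) \<and>
     (\<forall>a b c. leq E a b \<and> leq E b c \<longrightarrow> leq E a c) \<and>
     (\<forall>a\<in>ev E. finite {b. leq E b a}) \<and>
     (\<forall>X\<in>con E. finite X \<and> X \<subseteq> ev E) \<and>
     {} \<in> con E \<and>
     (\<forall>a\<in>ev E. {a} \<in> con E) \<and>
     (\<forall>X Y. X \<in> con E \<and> Y \<subseteq> X \<longrightarrow> Y \<in> con E) \<and>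
     (\<forall>X a b. X \<in> con E \<and> b \<in> X \<and> leq E a b \<longrightarrow> insert a X \<in> con E)"

definition config :: "'e esp \<Rightarrow> 'e set \<Rightarrow> bool" where
  "config E x \<longleftrightarrow> x \<in> con E \<and> (\<forall>a b. b \<in> x \<and> leq E a b \<longrightarrow> a \<in> x)"

definition lt :: "'e esp \<Rightarrow> 'e \<Rightarrow> 'e \<Rightarrow> bool" where
  "lt E a b \<longleftrightarrow> leq E a b \<and> a \<noteq> b"

definition imm :: "'e esp \<Rightarrow> 'e \<Rightarrow> 'e \<Rightarrow> bool" where
  "imm E a b \<longleftrightarrow> lt E a b \<and> \<not> (\<exists>c. lt E a c \<and> lt E c b)"

definition es_map :: "'e esp \<Rightarrow> 'f esp \<Rightarrow> ('e \<Rightarrow> 'f) \<Rightarrow> bool" where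
  "es_map E F f \<longleftrightarrow> (\<forall>a\<in>ev E. f a \<in> ev F) \<and>
     (\<forall>x. config E x \<longrightarrow> config F (f ` x) \<and> inj_on f x)"

definition esp_map :: "'e esp \<Rightarrow> 'f esp \<Rightarrow> ('e \<Rightarrow> 'f) \<Rightarrow> bool" where
  "esp_map E F f \<longleftrightarrow> es_map E F f \<and> (\<forall>a\<in>ev E. pol F (f a) = pol E a)"

definition rigid :: "'e esp \<Rightarrow> 'f esp \<Rightarrow> ('e \<Rightarrow> 'f) \<Rightarrow> bool" where
  "rigid E F f \<longleftrightarrow> (\<forall>a b. leq E a b \<longrightarrow> leq F (f a) (f b))"

definition open_map :: "'e esp \<Rightarrow> 'f esp \<Rightarrow> ('e \<Rightarrow> 'f) \<Rightarrow> bool" where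
  "open_map E F f \<longleftrightarrow> es_map E F f \<and> rigid E F f \<and>
     (\<forall>x y. config E x \<and> config F y \<and> f ` x \<subseteq> y \<longrightarrow>
        (\<exists>z. config E z \<and> x \<subseteq> z \<and> f ` z = y))"

definition bij_rel :: "('a \<times> 'b) set \<Rightarrow> bool" where
  "bij_rel \<theta> \<longleftrightarrow> (\<forall>a b c. (a,b) \<in> \<theta> \<and> (a,c) \<in> \<theta> \<longrightarrow> b = c) \<and>
                  (\<forall>a b c. (a,c) \<in> \<theta> \<and> (b,c) \<in> \<theta> \<longrightarrow> a = b)"

definition iso_family :: "'e esp \<Rightarrow> ('e \<times> 'e) set set \<Rightarrow> bool" where
  "iso_family E S \<longleftrightarrow>
     (\<forall>\<theta>\<in>S. config E (fst ` \<theta>) \<and> config E (snd ` \<theta>) \<and> bij_rel \<theta>) \<and>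
     (\<forall>x. config E x \<longrightarrow> Id_on x \<in> S) \<and>
     (\<forall>\<theta>\<in>S. \<theta>\<inverse> \<in> S) \<and>
     (\<forall>\<theta> \<phi>. \<theta> \<in> S \<and> \<phi> \<in> S \<and> snd ` \<theta> = fst ` \<phi> \<longrightarrow> \<theta> O \<phi> \<in> S) \<and>
     (\<forall>\<theta> x. \<theta> \<in> S \<and> config E x \<and> x \<subseteq> fst ` \<theta> \<longrightarrow> {p\<in>\<theta>. fst p \<in> x} \<in> S) \<and>
     (\<forall>\<theta> y. \<theta> \<in> S \<and> config E y \<and> fst ` \<theta> \<subseteq> y \<longrightarrow>
        (\<exists>\<theta>'\<in>S. \<theta> \<subseteq> \<theta>' \<and> fst ` \<theta>' = y))"

definition sym_fam :: "'t esp \<Rightarrow> ('t \<Rightarrow> 'a) \<Rightarrow> ('t \<Rightarrow> 'a) \<Rightarrow> ('a \<times> 'a) set set" where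
  "sym_fam T l r = {(\<lambda>e. (l e, r e)) ` x | x. config T x}"

text \<open>A symmetry on A: an event structure T with open maps l, r : T \<rightarrow> A, jointly monic,
  forming an equivalence relation -- expressed through the induced family of
  bijections being an isomorphism family (reflexivity, symmetry, transitivity,
  plus restriction/extension).\<close>
definition is_symmetry :: "'a esp \<Rightarrow> 't esp \<Rightarrow> ('t \<Rightarrow> 'a) \<Rightarrow> ('t \<Rightarrow> 'a) \<Rightarrow> bool" where
  "is_symmetry A T l r \<longleftrightarrow> is_es T \<and> open_map T A l \<and> open_map T A r \<and>
     inj_on (\<lambda>e. (l e, r e)) (ev T) \<and> iso_family A (sym_fam T l r)"

definition essp :: "'a esp \<Rightarrow> 't esp \<Rightarrow> ('t \<Rightarrow> 'a) \<Rightarrow> ('t \<Rightarrow> 'a) \<Rightarrow> bool" where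
  "essp A T l r \<longleftrightarrow> is_es A \<and> is_symmetry A T l r \<and> esp_map T A l \<and> esp_map T A r"

definition ext_pol :: "('a \<Rightarrow> bool) \<Rightarrow> bool \<Rightarrow> ('a \<times> 'a) set \<Rightarrow> ('a \<times> 'a) set \<Rightarrow> bool" where
  "ext_pol P b \<theta> \<theta>' \<longleftrightarrow> \<theta> \<subseteq> \<theta>' \<and> (\<forall>p\<in>\<theta>' - \<theta>. P (fst p) = b)"

definition thin_wrt :: "('a \<Rightarrow> bool) \<Rightarrow> 'a esp \<Rightarrow> ('a \<times> 'a) set set \<Rightarrow> bool" where
  "thin_wrt P A S \<longleftrightarrow> (\<forall>\<theta> \<theta>1 \<theta>2. \<theta> \<in> S \<and> \<theta>1 \<in> S \<and> \<theta>2 \<in> S \<and>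
       ext_pol P True \<theta> \<theta>1 \<and> ext_pol P True \<theta> \<theta>2 \<and> config A (fst ` \<theta>1 \<union> fst ` \<theta>2)
       \<longrightarrow> \<theta>1 \<union> \<theta>2 \<in> S)"

definition sub_symmetry :: "'a esp \<Rightarrow> ('a \<times> 'a) set set \<Rightarrow> ('a \<times> 'a) set set \<Rightarrow> bool" where
  "sub_symmetry A S S' \<longleftrightarrow> iso_family A S' \<and> S' \<subseteq> S"

definition receptive_wrt :: "('a \<Rightarrow> bool) \<Rightarrow> ('a \<times> 'a) set set \<Rightarrow> ('a \<times> 'a) set set \<Rightarrow> bool" where
  "receptive_wrt P S S' \<longleftrightarrow>
     (\<forall>\<theta> \<theta>'. \<theta> \<in> S' \<and> \<theta>' \<in> S \<and> ext_pol P False \<theta> \<theta>' \<longrightarrow> \<theta>' \<in> S')"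

definition race_preserving :: "'a esp \<Rightarrow> 't esp \<Rightarrow> ('t \<Rightarrow> 'a) \<Rightarrow> bool" where
  "race_preserving A T l \<longleftrightarrow>
     (\<forall>x e1 e2. config T x \<and> e1 \<notin> x \<and> e2 \<notin> x \<and>
        config T (insert e1 x) \<and> config T (insert e2 x) \<and>
        \<not> config T (insert e1 (insert e2 x)) \<and>
        \<not> pol T e1 \<and> pol T e2 \<longrightarrow>
        \<not> config A (insert (l e1) (insert (l e2) (l ` x))))"

definition tcg :: "'a esp \<Rightarrow> 't esp \<Rightarrow> ('t \<Rightarrow> 'a) \<Rightarrow> ('t \<Rightarrow> 'a)
                   \<Rightarrow> ('a \<times> 'a) set set \<Rightarrow> ('a \<times> 'a) set set \<Rightarrow> bool" where
  "tcg A T l r Sm Sp \<longleftrightarrow> essp A T l r \<and>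
     thin_wrt (pol A) A (sym_fam T l r) \<and>
     race_preserving A T l \<and>
     sub_symmetry A (sym_fam T l r) Sm \<and>
     thin_wrt (\<lambda>a. \<not> pol A a) A Sm \<and>
     receptive_wrt (\<lambda>a. \<not> pol A a) (sym_fam T l r) Sm \<and>
     sub_symmetry A (sym_fam T l r) Sp \<and>
     thin_wrt (pol A) A Sp \<and>
     receptive_wrt (pol A) (sym_fam T l r) Sp"

text \<open>A-dual par A, with events (1,a) (in dual of A) and (2,a) (in A).\<close>
definition dual_par :: "'e esp \<Rightarrow> (nat \<times> 'e) esp" where
  "dual_par A = \<lparr> ev = {(i,a). i \<in> {1,2} \<and> a \<in> ev A},
     leq = (\<lambda>(i,a) (j,b). i = j \<and> i \<in> {1,2} \<and> leq A a b),
     con = {X. X \<subseteq> {(i,a). i \<in> {1,2} \<and> a \<in> ev A} \<and> finite X \<and>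
                {a. (1,a) \<in> X} \<in> con A \<and> {a. (2,a) \<in> X} \<in> con A},
     pol = (\<lambda>(i,a). if i = 1 then \<not> pol A a else pol A a) \<rparr>"

definition cc_step :: "'e esp \<Rightarrow> nat \<times> 'e \<Rightarrow> nat \<times> 'e \<Rightarrow> bool" where
  "cc_step A p q \<longleftrightarrow> leq (dual_par A) p q \<or>
     (p \<in> ev (dual_par A) \<and> \<not> pol (dual_par A) p \<and> q = (3 - fst p, snd p))"

definition CC_leq :: "'e esp \<Rightarrow> nat \<times> 'e \<Rightarrow> nat \<times> 'e \<Rightarrow> bool" where
  "CC_leq A p q \<longleftrightarrow> p \<in> ev (dual_par A) \<and> q \<in> ev (dual_par A) \<and> (cc_step A)\<^sup>*\<^sup>* p q"

definition CC :: "'e esp \<Rightarrow> (nat \<times> 'e) esp" where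
  "CC A = \<lparr> ev = ev (dual_par A),
     leq = CC_leq A,
     con = {X. X \<subseteq> ev (dual_par A) \<and> finite X \<and>
               {p. \<exists>q\<in>X. CC_leq A p q} \<in> con (dual_par A)},
     pol = pol (dual_par A) \<rparr>"

definition cc_map :: "('a \<Rightarrow> 'b) \<Rightarrow> nat \<times> 'a \<Rightarrow> nat \<times> 'b" where
  "cc_map f = (\<lambda>(i,a). (i, f a))"

definition image_rel :: "('a \<Rightarrow> 'b) \<Rightarrow> ('a \<times> 'a) set \<Rightarrow> ('b \<times> 'b) set" where
  "image_rel f \<theta> = (\<lambda>(a,b). (f a, f b)) ` \<theta>"

definition essp_map :: "'s esp \<Rightarrow> 'u esp \<Rightarrow> ('u \<Rightarrow> 's) \<Rightarrow> ('u \<Rightarrow> 's) \<Rightarrow>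
                        'a esp \<Rightarrow> 't esp \<Rightarrow> ('t \<Rightarrow> 'a) \<Rightarrow> ('t \<Rightarrow> 'a) \<Rightarrow> ('s \<Rightarrow> 'a) \<Rightarrow> bool" where
  "essp_map S U lS rS A T lA rA \<sigma> \<longleftrightarrow> essp S U lS rS \<and> essp A T lA rA \<and> esp_map S A \<sigma> \<and>
     (\<forall>\<theta>\<in>sym_fam U lS rS. image_rel \<sigma> \<theta> \<in> sym_fam T lA rA)"

definition courteous :: "'s esp \<Rightarrow> 'a esp \<Rightarrow> ('s \<Rightarrow> 'a) \<Rightarrow> bool" where
  "courteous S A \<sigma> \<longleftrightarrow> (\<forall>s1 s2. imm S s1 s2 \<and> (pol S s1 \<or> \<not> pol S s2) \<longrightarrow>
                                  imm A (\<sigma> s1) (\<sigma> s2))"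

definition strong_receptive :: "'a esp \<Rightarrow> ('s \<times> 's) set set \<Rightarrow> ('a \<times> 'a) set set \<Rightarrow> ('s \<Rightarrow> 'a) \<Rightarrow> bool" where
  "strong_receptive A SS SA \<sigma> \<longleftrightarrow>
     (\<forall>\<theta> a1 a2. \<theta> \<in> SS \<and> a1 \<notin> fst ` image_rel \<sigma> \<theta> \<and>
        insert (a1, a2) (image_rel \<sigma> \<theta>) \<in> SA \<and> \<not> pol A a1 \<and> \<not> pol A a2 \<longrightarrow>
        (\<exists>!p. fst p \<notin> fst ` \<theta> \<and> insert p \<theta> \<in> SS \<and> \<sigma> (fst p) = a1 \<and> \<sigma> (snd p) = a2))"

definition sim_strategy :: "'s esp \<Rightarrow> 'u esp \<Rightarrow> ('u \<Rightarrow> 's) \<Rightarrow> ('u \<Rightarrow> 's) \<Rightarrow>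
                        'a esp \<Rightarrow> 't esp \<Rightarrow> ('t \<Rightarrow> 'a) \<Rightarrow> ('t \<Rightarrow> 'a) \<Rightarrow> ('s \<Rightarrow> 'a) \<Rightarrow> bool" where
  "sim_strategy S U lS rS A T lA rA \<sigma> \<longleftrightarrow>
     essp_map S U lS rS A T lA rA \<sigma> \<and>
     courteous S A \<sigma> \<and>
     strong_receptive A (sym_fam U lS rS) (sym_fam T lA rA) \<sigma> \<and>
     thin_wrt (pol S) S (sym_fam U lS rS)"

end

theory Submission
  imports Defs
begin


section \<open>Basic event structure facts\<close>

lemma es_p1: "is_es E \<Longrightarrow> (\<forall>a b. leq E a b \<longrightarrow> a \<in> ev E \<and> b \<in> ev E)" unfolding is_es_def by (elim conjE) assumption
lemma es_p2: "is_es E \<Longrightarrow> (\<forall>a\<in>ev E. leq E a a)" unfolding is_es_def by (elim conjE) assumption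
lemma es_p3: "is_es E \<Longrightarrow> (\<forall>a b. leq E a b \<and> leq E b a \<longrightarrow> a = b)" unfolding is_es_def by (elim conjE) assumption
lemma es_p4: "is_es E \<Longrightarrow> (\<forall>a b c. leq E a b \<and> leq E b c \<longrightarrow> leq E a c)" unfolding is_es_def by (elim conjE) assumption
lemma es_p5: "is_es E \<Longrightarrow> (\<forall>a\<in>ev E. finite {b. leq E b a})" unfolding is_es_def by (elim conjE) assumption
lemma es_p6: "is_es E \<Longrightarrow> (\<forall>X\<in>con E. finite X \<and> X \<subseteq> ev E)" unfolding is_es_def by (elim conjE) assumption
lemma es_p7: "is_es E \<Longrightarrow> {} \<in> con E" unfolding is_es_def by (elim conjE) assumption
lemma es_p8: "is_es E \<Longrightarrow> (\<forall>a\<in>ev E. {a} \<in> con E)" unfolding is_es_def by (elim conjE) assumption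
lemma es_p9: "is_es E \<Longrightarrow> (\<forall>X Y. X \<in> con E \<and> Y \<subseteq> X \<longrightarrow> Y \<in> con E)" unfolding is_es_def by (elim conjE) assumption
lemma es_p10: "is_es E \<Longrightarrow> (\<forall>X a b. X \<in> con E \<and> b \<in> X \<and> leq E a b \<longrightarrow> insert a X \<in> con E)" unfolding is_es_def by (elim conjE) assumption

lemma es_leq_ev: "is_es E \<Longrightarrow> leq E a b \<Longrightarrow> a \<in> ev E \<and> b \<in> ev E" using es_p1 by blast
lemma es_refl: "is_es E \<Longrightarrow> a \<in> ev E \<Longrightarrow> leq E a a" using es_p2 by blast
lemma es_antisym: "is_es E \<Longrightarrow> leq E a b \<Longrightarrow> leq E b a \<Longrightarrow> a = b" using es_p3 by blast
lemma es_trans: "is_es E \<Longrightarrow> leq E a b \<Longrightarrow> leq E b c \<Longrightarrow> leq E a c" using es_p4 by blast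
lemma es_fin: "is_es E \<Longrightarrow> a \<in> ev E \<Longrightarrow> finite {b. leq E b a}" using es_p5 by blast
lemma es_con_fin: "is_es E \<Longrightarrow> X \<in> con E \<Longrightarrow> finite X" using es_p6 by blast
lemma es_con_ev: "is_es E \<Longrightarrow> X \<in> con E \<Longrightarrow> X \<subseteq> ev E" using es_p6 by blast
lemma es_empty: "is_es E \<Longrightarrow> {} \<in> con E" using es_p7 by blast
lemma es_single: "is_es E \<Longrightarrow> a \<in> ev E \<Longrightarrow> {a} \<in> con E" using es_p8 by blast
lemma es_sub: "is_es E \<Longrightarrow> X \<in> con E \<Longrightarrow> Y \<subseteq> X \<Longrightarrow> Y \<in> con E" using es_p9 by blast
lemma es_down: "is_es E \<Longrightarrow> X \<in> con E \<Longrightarrow> b \<in> X \<Longrightarrow> leq E a b \<Longrightarrow> insert a X \<in> con E"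
  using es_p10 by blast

lemma config_con: "config E x \<Longrightarrow> x \<in> con E" by (simp add: config_def)
lemma config_down: "config E x \<Longrightarrow> b \<in> x \<Longrightarrow> leq E a b \<Longrightarrow> a \<in> x" unfolding config_def by blast
lemma config_ev: "is_es E \<Longrightarrow> config E x \<Longrightarrow> x \<subseteq> ev E" by (meson config_con es_con_ev)
lemma config_fin: "is_es E \<Longrightarrow> config E x \<Longrightarrow> finite x" by (meson config_con es_con_fin)
lemma configI: "x \<in> con E \<Longrightarrow> (\<And>a b. b \<in> x \<Longrightarrow> leq E a b \<Longrightarrow> a \<in> x) \<Longrightarrow> config E x"
  unfolding config_def by blast
lemma config_empty: "is_es E \<Longrightarrow> config E {}"
  by (simp add: config_def es_empty)
lemma config_int: "is_es E \<Longrightarrow> config E x \<Longrightarrow> config E y \<Longrightarrow> config E (x \<inter> y)"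
proof (rule configI)
  assume "is_es E" "config E x" "config E y"
  then show "x \<inter> y \<in> con E" using es_sub[OF _ config_con[of E x], of "x \<inter> y"] by blast
next
  fix a b assume "config E x" "config E y" "b \<in> x \<inter> y" "leq E a b"
  then show "a \<in> x \<inter> y" using config_down[of E x b a] config_down[of E y b a] by blast
qed

lemma dc_con_aux: "finite F \<Longrightarrow> is_es E \<Longrightarrow> a \<in> ev E \<Longrightarrow> F \<subseteq> {b. leq E b a} \<Longrightarrow> insert a F \<in> con E"
proof (induction F rule: finite_induct)
  case empty then show ?case by (simp add: es_single)
next
  case (insert f F)
  then have "insert a F \<in> con E" by auto
  moreover have "leq E f a" using insert by auto
  ultimately have "insert f (insert a F) \<in> con E" using es_down[OF insert(4)] by blast
  then show ?case by (simp add: insert_commute)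
qed

lemma config_dc: "is_es E \<Longrightarrow> a \<in> ev E \<Longrightarrow> config E {b. leq E b a}"
proof (rule configI)
  assume E: "is_es E" and a: "a \<in> ev E"
  have "insert a {b. leq E b a} \<in> con E" using dc_con_aux[OF es_fin[OF E a] E a] by blast
  moreover have "insert a {b. leq E b a} = {b. leq E b a}" using es_refl[OF E a] by blast
  ultimately show "{b. leq E b a} \<in> con E" by simp
next
  fix c b assume "is_es E" "b \<in> {b. leq E b a}" "leq E c b"
  then show "c \<in> {b. leq E b a}" using es_trans[of E c b a] by simp
qed

lemma card_dc_less: "is_es E \<Longrightarrow> leq E a b \<Longrightarrow> a \<noteq> b \<Longrightarrow> card {c. leq E c a} < card {c. leq E c b}"
proof -
  assume E: "is_es E" and ab: "leq E a b" "a \<noteq> b"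
  have b: "b \<in> ev E" using es_leq_ev[OF E ab(1)] by simp
  have "{c. leq E c a} \<subset> {c. leq E c b}"
  proof
    show "{c. leq E c a} \<subseteq> {c. leq E c b}" using es_trans[OF E _ ab(1)] by blast
    have "b \<notin> {c. leq E c a}" using es_antisym[OF E] ab by blast
    moreover have "b \<in> {c. leq E c b}" using es_refl[OF E b] by simp
    ultimately show "{c. leq E c a} \<noteq> {c. leq E c b}" by blast
  qed
  then show ?thesis using psubset_card_mono es_fin[OF E b] by blast
qed

lemma esmap_ev: "es_map E F f \<Longrightarrow> a \<in> ev E \<Longrightarrow> f a \<in> ev F" by (simp add: es_map_def)
lemma esmap_cfg: "es_map E F f \<Longrightarrow> config E x \<Longrightarrow> config F (f ` x)" by (simp add: es_map_def)
lemma esmap_inj: "es_map E F f \<Longrightarrow> config E x \<Longrightarrow> inj_on f x" by (simp add: es_map_def)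

lemma esmap_below: "es_map E F f \<Longrightarrow> config E x \<Longrightarrow> c \<in> x \<Longrightarrow> leq F b (f c) \<Longrightarrow> b \<in> f ` x"
  by (meson config_down esmap_cfg imageI)

section \<open>Sides and the dual\<close>

definition side :: "nat \<Rightarrow> (nat \<times> 'e) set \<Rightarrow> 'e set" where
  "side i X = {a. (i,a) \<in> X}"

lemma side_iff[simp]: "a \<in> side i X \<longleftrightarrow> (i,a) \<in> X" by (simp add: side_def)

lemma ev_dual: "ev (dual_par E) = {(i,a). i \<in> {1,2} \<and> a \<in> ev E}" by (simp add: dual_par_def)
lemma ev_dual_iff[simp]: "(i,a) \<in> ev (dual_par E) \<longleftrightarrow> (i = 1 \<or> i = 2) \<and> a \<in> ev E" by (simp add: dual_par_def)
lemma leq_dual[simp]: "leq (dual_par E) (i,a) (j,b) \<longleftrightarrow> i = j \<and> (i = 1 \<or> i = 2) \<and> leq E a b"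
  by (auto simp add: dual_par_def)
lemma pol_dual[simp]: "pol (dual_par E) (i,a) = (if i = 1 then \<not> pol E a else pol E a)"
  by (simp add: dual_par_def)
lemma con_dual: "X \<in> con (dual_par E) \<longleftrightarrow> X \<subseteq> ev (dual_par E) \<and> finite X \<and> side 1 X \<in> con E \<and> side 2 X \<in> con E"
  by (simp add: dual_par_def side_def)

lemma pol_dual_swap: "i = 1 \<or> i = 2 \<Longrightarrow> pol (dual_par E) (3 - i, a) = (\<not> pol (dual_par E) (i,a))"
  by auto

lemma split_dual: "X \<subseteq> ev (dual_par E) \<Longrightarrow> X = Pair 1 ` side 1 X \<union> Pair 2 ` side 2 X"
  by (auto simp add: ev_dual)

lemma fin_dual: "X \<subseteq> ev (dual_par E) \<Longrightarrow> finite (side 1 X) \<Longrightarrow> finite (side 2 X) \<Longrightarrow> finite X"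
  by (metis finite_Un finite_imageI split_dual)

definition cfgG :: "bool \<Rightarrow> 'e esp \<Rightarrow> (nat \<times> 'e) set \<Rightarrow> bool" where
  "cfgG b E x \<longleftrightarrow> x \<subseteq> ev (dual_par E) \<and> config E (side 1 x) \<and> config E (side 2 x) \<and>
     (b \<longrightarrow> (\<forall>i t. (i,t) \<in> x \<and> pol (dual_par E) (i,t) \<longrightarrow> (3 - i, t) \<in> x))"

lemma cfgG_side: "cfgG b E x \<Longrightarrow> i = 1 \<or> i = 2 \<Longrightarrow> config E (side i x)"
  by (auto simp add: cfgG_def)
lemma cfgG_ev: "cfgG b E x \<Longrightarrow> x \<subseteq> ev (dual_par E)" by (simp add: cfgG_def)
lemma cfgG_cc: "cfgG True E x \<Longrightarrow> (i,t) \<in> x \<Longrightarrow> pol (dual_par E) (i,t) \<Longrightarrow> (3 - i, t) \<in> x"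
  by (simp add: cfgG_def)
lemma cfgG_fin: "is_es E \<Longrightarrow> cfgG b E x \<Longrightarrow> finite x"
  by (meson cfgG_def config_fin fin_dual)

lemma is_es_dual: "is_es E \<Longrightarrow> is_es (dual_par E)"
  unfolding is_es_def[of "dual_par E"]
proof (intro conjI)
  assume E: "is_es E"
  show "\<forall>a b. leq (dual_par E) a b \<longrightarrow> a \<in> ev (dual_par E) \<and> b \<in> ev (dual_par E)"
    using es_leq_ev[OF E] by auto
  show "\<forall>a\<in>ev (dual_par E). leq (dual_par E) a a" using es_refl[OF E] by auto
  show "\<forall>a b. leq (dual_par E) a b \<and> leq (dual_par E) b a \<longrightarrow> a = b"
  proof (intro allI impI)
    fix p q assume h: "leq (dual_par E) p q \<and> leq (dual_par E) q p"
    obtain i a j b where pq: "p = (i,a)" "q = (j,b)" by fastforce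
    have "leq E a b" "leq E b a" "i = j" using h unfolding pq leq_dual by blast+
    then show "p = q" using es_antisym[OF E, of a b] pq by simp
  qed
  show "\<forall>a b c. leq (dual_par E) a b \<and> leq (dual_par E) b c \<longrightarrow> leq (dual_par E) a c"
  proof (intro allI impI)
    fix p q r assume h: "leq (dual_par E) p q \<and> leq (dual_par E) q r"
    obtain i a j b k c where pq: "p = (i,a)" "q = (j,b)" "r = (k,c)" by (metis surj_pair)
    have "leq E a b" "leq E b c" "i = j" "j = k" "i = 1 \<or> i = 2" using h unfolding pq leq_dual by blast+
    then show "leq (dual_par E) p r" using es_trans[OF E, of a b c] pq by simp
  qed
  show "\<forall>a\<in>ev (dual_par E). finite {b. leq (dual_par E) b a}"
  proof
    fix p assume "p \<in> ev (dual_par E)"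
    then obtain i a where p: "p = (i,a)" "a \<in> ev E" by (cases p) auto
    have "{b. leq (dual_par E) b p} \<subseteq> Pair i ` {b. leq E b a}" using p by auto
    then show "finite {b. leq (dual_par E) b p}" using es_fin[OF E p(2)] finite_subset by blast
  qed
  show "\<forall>X\<in>con (dual_par E). finite X \<and> X \<subseteq> ev (dual_par E)" by (simp add: con_dual)
  show "{} \<in> con (dual_par E)" using es_empty[OF E] by (simp add: con_dual side_def)
  show "\<forall>a\<in>ev (dual_par E). {a} \<in> con (dual_par E)"
    using es_empty[OF E] es_single[OF E] by (auto simp add: con_dual side_def)
  show "\<forall>X Y. X \<in> con (dual_par E) \<and> Y \<subseteq> X \<longrightarrow> Y \<in> con (dual_par E)"
  proof (intro allI impI)
    fix X Y assume h: "X \<in> con (dual_par E) \<and> Y \<subseteq> X"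
    have "side 1 Y \<subseteq> side 1 X" "side 2 Y \<subseteq> side 2 X" using h by auto
    then show "Y \<in> con (dual_par E)" using h es_sub[OF E] unfolding con_dual
      by (meson finite_subset subset_trans)
  qed
  show "\<forall>X a b. X \<in> con (dual_par E) \<and> b \<in> X \<and> leq (dual_par E) a b \<longrightarrow> insert a X \<in> con (dual_par E)"
  proof (intro allI impI)
    fix X p q assume h: "X \<in> con (dual_par E) \<and> q \<in> X \<and> leq (dual_par E) p q"
    obtain i a j b where pq: "p = (i,a)" "q = (j,b)" by fastforce
    have ij: "i = j" "i = 1 \<or> i = 2" "leq E a b" using h pq by auto
    have "a \<in> ev E" using es_leq_ev[OF E ij(3)] by simp
    have s: "side k (insert p X) = (if k = i then insert a (side k X) else side k X)" for k
      using pq by auto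
    have "side i (insert p X) \<in> con E"
      using s[of i] es_down[OF E, of "side i X" b a] h pq ij unfolding con_dual by auto
    then show "insert p X \<in> con (dual_par E)" using h s \<open>a \<in> ev E\<close> ij pq unfolding con_dual
      by (metis (no_types, lifting) ev_dual_iff finite_insert insert_subset)
  qed
qed

lemma config_dual: "is_es E \<Longrightarrow> config (dual_par E) x \<longleftrightarrow> cfgG False E x"
proof
  assume E: "is_es E" and c: "config (dual_par E) x"
  have X: "x \<subseteq> ev (dual_par E)" "side 1 x \<in> con E" "side 2 x \<in> con E"
    using config_con[OF c] by (auto simp add: con_dual)
  have "config E (side i x)" if "i = 1 \<or> i = 2" for i
  proof (rule configI)
    show "side i x \<in> con E" using X that by auto
    fix a b assume "b \<in> side i x" "leq E a b"
    then show "a \<in> side i x" using config_down[OF c, of "(i,b)" "(i,a)"] that by auto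
  qed
  then show "cfgG False E x" using X by (simp add: cfgG_def)
next
  assume E: "is_es E" and c: "cfgG False E x"
  show "config (dual_par E) x"
  proof (rule configI)
    show "x \<in> con (dual_par E)" using c cfgG_fin[OF E c] unfolding con_dual cfgG_def
      by (simp add: config_con)
    fix p q assume pq: "q \<in> x" "leq (dual_par E) p q"
    obtain i a j b where ab: "p = (i,a)" "q = (j,b)" by fastforce
    have ij: "i = j" "i = 1 \<or> i = 2" "leq E a b" using pq ab by auto
    have "b \<in> side i x" using pq ab ij by simp
    then have "a \<in> side i x" using config_down[OF cfgG_side[OF c ij(2)]] ij(3) by blast
    then show "p \<in> x" using ab by simp
  qed
qed




lemma is_esI:
  assumes "\<forall>a b. leq E a b \<longrightarrow> a \<in> ev E \<and> b \<in> ev E"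
    "\<forall>a\<in>ev E. leq E a a"
    "\<forall>a b. leq E a b \<and> leq E b a \<longrightarrow> a = b"
    "\<forall>a b c. leq E a b \<and> leq E b c \<longrightarrow> leq E a c"
    "\<forall>a\<in>ev E. finite {b. leq E b a}"
    "\<forall>X\<in>con E. finite X \<and> X \<subseteq> ev E"
    "{} \<in> con E"
    "\<forall>a\<in>ev E. {a} \<in> con E"
    "\<forall>X Y. X \<in> con E \<and> Y \<subseteq> X \<longrightarrow> Y \<in> con E"
    "\<forall>X a b. X \<in> con E \<and> b \<in> X \<and> leq E a b \<longrightarrow> insert a X \<in> con E"
  shows "is_es E"
  unfolding is_es_def by (intro conjI) (rule assms)+

lemma CC_ev[simp]: "ev (CC E) = ev (dual_par E)" by (simp add: CC_def)
lemma CC_leq_eq[simp]: "leq (CC E) = CC_leq E" by (simp add: CC_def)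
lemma CC_pol[simp]: "pol (CC E) = pol (dual_par E)" by (simp add: CC_def)
lemma CC_con: "X \<in> con (CC E) \<longleftrightarrow> X \<subseteq> ev (dual_par E) \<and> finite X \<and>
               {p. \<exists>q\<in>X. CC_leq E p q} \<in> con (dual_par E)" by (simp add: CC_def)

definition rk :: "'e esp \<Rightarrow> nat \<times> 'e \<Rightarrow> nat" where
  "rk E p = 2 * card {b. leq E b (snd p)} + (if pol (dual_par E) p then 1 else 0)"

lemma cc_step_cases:
  assumes "cc_step E p q"
  obtains i a b where "p = (i,a)" "q = (i,b)" "i = 1 \<or> i = 2" "leq E a b"
    | i a where "p = (i,a)" "q = (3 - i, a)" "i = 1 \<or> i = 2" "a \<in> ev E" "\<not> pol (dual_par E) (i,a)"
proof -
  obtain i a where p: "p = (i,a)" by (cases p)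
  obtain j b where q: "q = (j,b)" by (cases q)
  show thesis
  proof (cases "leq (dual_par E) p q")
    case True
    then have "i = j" "i = 1 \<or> i = 2" "leq E a b" unfolding p q leq_dual by blast+
    then show thesis using that(1)[of i a b] p q by blast
  next
    case False
    then have "p \<in> ev (dual_par E) \<and> \<not> pol (dual_par E) p \<and> q = (3 - fst p, snd p)"
      using assms unfolding cc_step_def by blast
    then have "(i = 1 \<or> i = 2) \<and> a \<in> ev E" "\<not> pol (dual_par E) (i,a)" "q = (3 - i, a)"
      unfolding p by simp_all
    then show thesis using that(2)[of i a] p by blast
  qed
qed

lemma cc_step_leq: "i = 1 \<or> i = 2 \<Longrightarrow> leq E a b \<Longrightarrow> cc_step E (i,a) (i,b)"
  unfolding cc_step_def by simp

lemma cc_step_cc: "i = 1 \<or> i = 2 \<Longrightarrow> a \<in> ev E \<Longrightarrow> pol (dual_par E) (i,a) \<Longrightarrow> cc_step E (3 - i, a) (i, a)"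
proof -
  assume h: "i = 1 \<or> i = 2" "a \<in> ev E" "pol (dual_par E) (i,a)"
  have "(3 - i, a) \<in> ev (dual_par E)" using h by auto
  moreover have "\<not> pol (dual_par E) (3 - i, a)" using h pol_dual_swap[of i E a] by simp
  moreover have "(i,a) = (3 - fst (3 - i, a), snd (3 - i, a))" using h by auto
  ultimately show ?thesis unfolding cc_step_def by blast
qed

lemma cc_rt_snd:
  assumes E: "is_es E" and r: "(cc_step E)\<^sup>*\<^sup>* p q" and p: "p \<in> ev (dual_par E)"
  shows "leq E (snd p) (snd q) \<and> q \<in> ev (dual_par E)"
  using r
proof (induction rule: rtranclp_induct)
  case base
  then show ?case using p es_refl[OF E] by (cases p) auto
next
  case (step q r)
  from step(2) show ?case
  proof (cases rule: cc_step_cases)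
    case (1 i a b)
    have "a \<in> ev E \<and> b \<in> ev E" using es_leq_ev[OF E 1(4)] .
    then show ?thesis using step(3) 1 es_trans[OF E, of "snd p" a b] by auto
  next
    case (2 i a)
    then show ?thesis using step(3) by auto
  qed
qed

lemma rk_step:
  assumes E: "is_es E" and s: "cc_step E p q"
  shows "p = q \<or> rk E p < rk E q"
  using s
proof (cases rule: cc_step_cases)
  case (1 i a b)
  show ?thesis
  proof (cases "a = b")
    case True then show ?thesis using 1 by simp
  next
    case False
    have "card {c. leq E c a} < card {c. leq E c b}" using card_dc_less[OF E 1(4) False] .
    then have "rk E p < rk E q" unfolding rk_def using 1 by simp
    then show ?thesis by simp
  qed
next
  case (2 i a)
  have "pol (dual_par E) q" using 2 pol_dual_swap[of i E a] by simp
  then have "rk E p < rk E q" unfolding rk_def using 2 by simp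
  then show ?thesis by simp
qed

lemma rk_rt:
  assumes E: "is_es E" and r: "(cc_step E)\<^sup>*\<^sup>* p q"
  shows "p = q \<or> rk E p < rk E q"
  using r
proof (induction rule: rtranclp_induct)
  case base then show ?case by simp
next
  case (step q r)
  then show ?case using rk_step[OF E step(2)] by auto
qed

lemma CC_leq_ev: "CC_leq E p q \<Longrightarrow> p \<in> ev (dual_par E) \<and> q \<in> ev (dual_par E)"
  unfolding CC_leq_def by simp

lemma CC_leq_snd: "is_es E \<Longrightarrow> CC_leq E p q \<Longrightarrow> leq E (snd p) (snd q)"
  unfolding CC_leq_def using cc_rt_snd by blast

lemma CC_leq_step: "p \<in> ev (dual_par E) \<Longrightarrow> q \<in> ev (dual_par E) \<Longrightarrow> cc_step E p q \<Longrightarrow> CC_leq E p q"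
  unfolding CC_leq_def by simp

lemma cfg_step_closed:
  assumes c: "cfgG True E x" and q: "q \<in> x" and s: "cc_step E p q"
  shows "p \<in> x"
  using s
proof (cases rule: cc_step_cases)
  case (1 i a b)
  have "b \<in> side i x" using q 1 by simp
  then have "a \<in> side i x" using config_down[OF cfgG_side[OF c 1(3)] _ 1(4)] by blast
  then show ?thesis using 1 by simp
next
  case (2 i a)
  have "pol (dual_par E) (3 - i, a)" using 2 pol_dual_swap[of i E a] by simp
  then have "(3 - (3 - i), a) \<in> x" using cfgG_cc[OF c] q 2 by simp
  then show ?thesis using 2 by auto
qed

lemma cfg_rt_closed:
  assumes c: "cfgG True E x" and r: "(cc_step E)\<^sup>*\<^sup>* p q" and q: "q \<in> x"
  shows "p \<in> x"
  using r q
proof (induction rule: converse_rtranclp_induct)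
  case base then show ?case .
next
  case (step p p')
  then show ?case using cfg_step_closed[OF c] by blast
qed

lemma config_CC: assumes E: "is_es E" shows "config (CC E) x \<longleftrightarrow> cfgG True E x"
proof
  assume c: "config (CC E) x"
  have xc: "x \<in> con (CC E)" using config_con[OF c] .
  have X: "x \<subseteq> ev (dual_par E)" using xc CC_con by blast
  have down: "a \<in> x" if "b \<in> x" "CC_leq E a b" for a b
    using config_down[OF c, of b a] that by simp
  have "{p. \<exists>q\<in>x. CC_leq E p q} = x"
  proof
    show "{p. \<exists>q\<in>x. CC_leq E p q} \<subseteq> x" using down by blast
    show "x \<subseteq> {p. \<exists>q\<in>x. CC_leq E p q}"
    proof
      fix p assume "p \<in> x"
      then have "CC_leq E p p" using X unfolding CC_leq_def by auto
      then show "p \<in> {p. \<exists>q\<in>x. CC_leq E p q}" using \<open>p \<in> x\<close> by blast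
    qed
  qed
  then have "x \<in> con (dual_par E)" using xc CC_con by metis
  then have S: "side 1 x \<in> con E" "side 2 x \<in> con E" using con_dual by blast+
  have cfs: "config E (side i x)" if i: "i = 1 \<or> i = 2" for i
  proof (rule configI)
    show "side i x \<in> con E" using S i by blast
    fix a b assume "b \<in> side i x" "leq E a b"
    moreover have "a \<in> ev E" "b \<in> ev E" using es_leq_ev[OF E \<open>leq E a b\<close>] by simp_all
    ultimately have "CC_leq E (i,a) (i,b)"
      using CC_leq_step[of "(i,a)" E "(i,b)"] cc_step_leq[OF i, of E a b] i by auto
    then show "a \<in> side i x" using down \<open>b \<in> side i x\<close> by simp
  qed
  have cc: "(3 - i, t) \<in> x" if "(i,t) \<in> x" "pol (dual_par E) (i,t)" for i t
  proof -
    have it: "(i = 1 \<or> i = 2) \<and> t \<in> ev E" using X that(1) by auto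
    then have "cc_step E (3 - i, t) (i, t)" using cc_step_cc[of i t E] that(2) by blast
    moreover have "(3 - i, t) \<in> ev (dual_par E)" using it by auto
    ultimately have "CC_leq E (3 - i, t) (i,t)" using CC_leq_step[of "(3 - i, t)" E "(i,t)"] X that(1) by blast
    then show ?thesis using down[of "(i,t)" "(3 - i, t)"] that(1) by blast
  qed
  show "cfgG True E x" unfolding cfgG_def using X cfs cc by blast
next
  assume c: "cfgG True E x"
  have X: "x \<subseteq> ev (dual_par E)" using cfgG_ev[OF c] .
  have down: "a \<in> x" if "b \<in> x" "CC_leq E a b" for a b
    using cfg_rt_closed[OF c, of a b] that unfolding CC_leq_def by blast
  have "{p. \<exists>q\<in>x. CC_leq E p q} = x"
  proof
    show "{p. \<exists>q\<in>x. CC_leq E p q} \<subseteq> x" using down by blast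
    show "x \<subseteq> {p. \<exists>q\<in>x. CC_leq E p q}"
    proof
      fix p assume "p \<in> x"
      then have "CC_leq E p p" using X unfolding CC_leq_def by auto
      then show "p \<in> {p. \<exists>q\<in>x. CC_leq E p q}" using \<open>p \<in> x\<close> by blast
    qed
  qed
  moreover have "x \<in> con (dual_par E)"
    using config_dual[OF E] c config_con unfolding cfgG_def by metis
  ultimately have "x \<in> con (CC E)" using CC_con[of x E] X cfgG_fin[OF E c] by simp
  then show "config (CC E) x" using down configI[of x "CC E"] by simp
qed

lemma is_es_CC: assumes E: "is_es E" shows "is_es (CC E)"
proof (rule is_esI)
  have ED: "is_es (dual_par E)" using is_es_dual[OF E] .
  show "\<forall>a b. leq (CC E) a b \<longrightarrow> a \<in> ev (CC E) \<and> b \<in> ev (CC E)"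
    unfolding CC_leq_eq CC_ev using CC_leq_ev by blast
  show "\<forall>a\<in>ev (CC E). leq (CC E) a a" by (simp add: CC_leq_def)
  show "\<forall>a b. leq (CC E) a b \<and> leq (CC E) b a \<longrightarrow> a = b"
  proof (intro allI impI)
    fix p q assume "leq (CC E) p q \<and> leq (CC E) q p"
    then have "(cc_step E)\<^sup>*\<^sup>* p q" "(cc_step E)\<^sup>*\<^sup>* q p" unfolding CC_leq_eq CC_leq_def by blast+
    then have "p = q \<or> rk E p < rk E q" "q = p \<or> rk E q < rk E p" using rk_rt[OF E] by blast+
    then show "p = q" by auto
  qed
  show "\<forall>a b c. leq (CC E) a b \<and> leq (CC E) b c \<longrightarrow> leq (CC E) a c"
    unfolding CC_leq_eq CC_leq_def by (meson rtranclp_trans)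
  have fin: "finite {b. CC_leq E b a}" if "a \<in> ev (dual_par E)" for a
  proof -
    have "{b. CC_leq E b a} \<subseteq> {1,2} \<times> {c. leq E c (snd a)}"
    proof
      fix b assume "b \<in> {b. CC_leq E b a}"
      then have "CC_leq E b a" by simp
      then have "leq E (snd b) (snd a)" "b \<in> ev (dual_par E)" using CC_leq_snd[OF E] CC_leq_ev by blast+
      then show "b \<in> {1,2} \<times> {c. leq E c (snd a)}" by (cases b) auto
    qed
    moreover have "snd a \<in> ev E" using that by (cases a) auto
    ultimately show ?thesis using es_fin[OF E] finite_subset by (metis finite.emptyI finite.insertI finite_SigmaI)
  qed
  show "\<forall>a\<in>ev (CC E). finite {b. leq (CC E) b a}" using fin by simp
  show "\<forall>X\<in>con (CC E). finite X \<and> X \<subseteq> ev (CC E)" unfolding CC_ev using CC_con by blast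
  show "{} \<in> con (CC E)" unfolding CC_con using es_empty[OF ED] by simp
  show "\<forall>a\<in>ev (CC E). {a} \<in> con (CC E)"
  proof
    fix a assume a: "a \<in> ev (CC E)"
    then have a': "a \<in> ev (dual_par E)" "snd a \<in> ev E" by (cases a, auto)+
    let ?D = "{p. \<exists>q\<in>{a}. CC_leq E p q}"
    have D: "?D = {b. CC_leq E b a}" by simp
    have ev: "?D \<subseteq> ev (dual_par E)" using CC_leq_ev by blast
    have fi: "finite ?D" using fin[OF a'(1)] D by simp
    have sub: "side i ?D \<subseteq> {c. leq E c (snd a)}" for i
      using CC_leq_snd[OF E] by fastforce
    have dcc: "{c. leq E c (snd a)} \<in> con E" using config_con[OF config_dc[OF E a'(2)]] .
    have "side 1 ?D \<in> con E" "side 2 ?D \<in> con E" using es_sub[OF E dcc sub] by blast+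
    then have "?D \<in> con (dual_par E)" using con_dual[of ?D E] ev fi by blast
    then show "{a} \<in> con (CC E)" unfolding CC_con using a' by simp
  qed
  show "\<forall>X Y. X \<in> con (CC E) \<and> Y \<subseteq> X \<longrightarrow> Y \<in> con (CC E)"
  proof (intro allI impI)
    fix X Y assume h: "X \<in> con (CC E) \<and> Y \<subseteq> X"
    have "{p. \<exists>q\<in>Y. CC_leq E p q} \<subseteq> {p. \<exists>q\<in>X. CC_leq E p q}" using h by blast
    moreover have hX: "X \<subseteq> ev (dual_par E)" "finite X" "{p. \<exists>q\<in>X. CC_leq E p q} \<in> con (dual_par E)"
      using h CC_con[of X E] by blast+
    ultimately have "{p. \<exists>q\<in>Y. CC_leq E p q} \<in> con (dual_par E)" using es_sub[OF ED] by blast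
    moreover have "finite Y" using hX(2) h finite_subset[of Y X] by blast
    ultimately show "Y \<in> con (CC E)" using CC_con[of Y E] h hX(1) by blast
  qed
  show "\<forall>X a b. X \<in> con (CC E) \<and> b \<in> X \<and> leq (CC E) a b \<longrightarrow> insert a X \<in> con (CC E)"
  proof (intro allI impI)
    fix X a b assume h: "X \<in> con (CC E) \<and> b \<in> X \<and> leq (CC E) a b"
    then have ab: "CC_leq E a b" by simp
    have "{p. \<exists>q\<in>insert a X. CC_leq E p q} = {p. \<exists>q\<in>X. CC_leq E p q}"
    proof
      show "{p. \<exists>q\<in>insert a X. CC_leq E p q} \<subseteq> {p. \<exists>q\<in>X. CC_leq E p q}"
      proof
        fix p assume "p \<in> {p. \<exists>q\<in>insert a X. CC_leq E p q}"
        then obtain q where q: "q \<in> insert a X" "CC_leq E p q" by blast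
        show "p \<in> {p. \<exists>q\<in>X. CC_leq E p q}"
        proof (cases "q = a")
          case True
          then have "CC_leq E p b" using q ab unfolding CC_leq_def by (meson rtranclp_trans)
          then show ?thesis using h by blast
        next
          case False then show ?thesis using q by blast
        qed
      qed
      show "{p. \<exists>q\<in>X. CC_leq E p q} \<subseteq> {p. \<exists>q\<in>insert a X. CC_leq E p q}" by blast
    qed
    moreover have "a \<in> ev (dual_par E)" using CC_leq_ev[OF ab] by simp
    ultimately show "insert a X \<in> con (CC E)" using h unfolding CC_con by simp
  qed
qed




lemma cc_map_simp[simp]: "cc_map f (i,a) = (i, f a)" by (simp add: cc_map_def)

lemma side_image: "side i (cc_map f ` x) = f ` side i x"
proof
  show "side i (cc_map f ` x) \<subseteq> f ` side i x"
  proof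
    fix a assume "a \<in> side i (cc_map f ` x)"
    then obtain e where e: "e \<in> x" "cc_map f e = (i,a)" by auto
    obtain j t where "e = (j,t)" by (cases e)
    then show "a \<in> f ` side i x" using e by auto
  qed
  show "f ` side i x \<subseteq> side i (cc_map f ` x)" by force
qed

definition imgT :: "('t \<Rightarrow> 'a) \<Rightarrow> ('t \<Rightarrow> 'a) \<Rightarrow> 't set \<Rightarrow> ('a \<times> 'a) set" where
  "imgT l r w = (\<lambda>e. (l e, r e)) ` w"

definition imgC :: "('t \<Rightarrow> 'a) \<Rightarrow> ('t \<Rightarrow> 'a) \<Rightarrow> (nat \<times> 't) set \<Rightarrow> ((nat \<times> 'a) \<times> (nat \<times> 'a)) set" where
  "imgC l r x = (\<lambda>e. (cc_map l e, cc_map r e)) ` x"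

definition sideP :: "nat \<Rightarrow> ((nat \<times> 'a) \<times> (nat \<times> 'a)) set \<Rightarrow> ('a \<times> 'a) set" where
  "sideP i \<theta> = {(a,b). ((i,a),(i,b)) \<in> \<theta>}"

definition sided :: "((nat \<times> 'a) \<times> (nat \<times> 'a)) set \<Rightarrow> bool" where
  "sided \<theta> \<longleftrightarrow> (\<forall>p\<in>\<theta>. \<exists>i a b. (i = 1 \<or> i = 2) \<and> p = ((i,a),(i,b)))"

definition glue :: "(nat \<Rightarrow> 't set) \<Rightarrow> (nat \<times> 't) set" where
  "glue W = {(i,t). (i = 1 \<or> i = 2) \<and> t \<in> W i}"

lemma glue_mem[simp]: "(i,t) \<in> glue W \<longleftrightarrow> (i = 1 \<or> i = 2) \<and> t \<in> W i"
  by (simp add: glue_def)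

lemma side_glue: "i = 1 \<or> i = 2 \<Longrightarrow> side i (glue W) = W i"
  by auto

lemma imgT_mem: "(p,q) \<in> imgT l r w \<longleftrightarrow> (\<exists>t\<in>w. p = l t \<and> q = r t)"
  unfolding imgT_def by auto

lemma imgC_mem: "((i,a),(j,c)) \<in> imgC l r x \<longleftrightarrow> i = j \<and> (\<exists>t. (i,t) \<in> x \<and> a = l t \<and> c = r t)"
proof
  assume "((i,a),(j,c)) \<in> imgC l r x"
  then obtain e where e: "e \<in> x" "((i,a),(j,c)) = (cc_map l e, cc_map r e)" unfolding imgC_def by blast
  obtain k t where "e = (k,t)" by (cases e)
  then show "i = j \<and> (\<exists>t. (i,t) \<in> x \<and> a = l t \<and> c = r t)" using e by auto
next
  assume "i = j \<and> (\<exists>t. (i,t) \<in> x \<and> a = l t \<and> c = r t)"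
  then obtain t where "i = j" "(i,t) \<in> x" "a = l t" "c = r t" by blast
  then show "((i,a),(j,c)) \<in> imgC l r x" unfolding imgC_def by force
qed

lemma sideP_imgC: "sideP i (imgC l r x) = imgT l r (side i x)"
proof (rule set_eqI)
  fix p :: "'a \<times> 'a"
  obtain a c where p: "p = (a,c)" by (cases p)
  have "p \<in> sideP i (imgC l r x) \<longleftrightarrow> (\<exists>t. (i,t) \<in> x \<and> a = l t \<and> c = r t)"
    unfolding sideP_def p using imgC_mem[of i a i c l r x] by simp
  also have "\<dots> \<longleftrightarrow> p \<in> imgT l r (side i x)" unfolding p imgT_mem side_def by blast
  finally show "p \<in> sideP i (imgC l r x) \<longleftrightarrow> p \<in> imgT l r (side i x)" .
qed

lemma sided_imgC: assumes "x \<subseteq> ev (dual_par E)" shows "sided (imgC l r x)"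
  unfolding sided_def
proof
  fix p assume "p \<in> imgC l r x"
  then obtain e where e: "e \<in> x" "p = (cc_map l e, cc_map r e)" unfolding imgC_def by blast
  obtain i t where it: "e = (i,t)" by (cases e)
  have "i = 1 \<or> i = 2" using assms e(1) it by auto
  moreover have "p = ((i, l t), (i, r t))" using e(2) it by simp
  ultimately show "\<exists>i a b. (i = 1 \<or> i = 2) \<and> p = ((i, a), i, b)" by blast
qed

lemma sided_eq:
  assumes "sided \<theta>" "sided \<phi>" "sideP 1 \<theta> = sideP 1 \<phi>" "sideP 2 \<theta> = sideP 2 \<phi>"
  shows "\<theta> = \<phi>"
proof -
  have "p \<in> \<phi>" if s: "sided \<theta>" and e1: "sideP 1 \<theta> = sideP 1 \<phi>" and e2: "sideP 2 \<theta> = sideP 2 \<phi>" and pm: "p \<in> \<theta>" for \<theta> \<phi> p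
  proof -
    obtain i a b where p: "i = 1 \<or> i = 2" "p = ((i,a),(i,b))" using s pm unfolding sided_def by blast
    then have "(a,b) \<in> sideP i \<theta>" using pm unfolding sideP_def by simp
    moreover have "sideP i \<theta> = sideP i \<phi>" using e1 e2 p(1) by (cases "i = 1") simp_all
    ultimately have "(a,b) \<in> sideP i \<phi>" by simp
    then show ?thesis using p unfolding sideP_def by simp
  qed
  note h = this
  show ?thesis
  proof (rule equalityI)
    show "\<theta> \<subseteq> \<phi>" using h[of \<theta> \<phi>] assms by blast
    show "\<phi> \<subseteq> \<theta>" using h[of \<phi> \<theta>] assms(2) assms(3)[symmetric] assms(4)[symmetric] by blast
  qed
qed

lemma imgC_glue:
  assumes "sided \<theta>" "\<And>i. i = 1 \<or> i = 2 \<Longrightarrow> imgT l r (W i) = sideP i \<theta>"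
  shows "imgC l r (glue W) = \<theta>"
proof (rule sided_eq)
  show "sided (imgC l r (glue W))" unfolding sided_def
  proof
    fix p assume "p \<in> imgC l r (glue W)"
    then obtain e where e: "e \<in> glue W" "p = (cc_map l e, cc_map r e)" unfolding imgC_def by blast
    obtain i t where it: "e = (i,t)" by (cases e)
    have "i = 1 \<or> i = 2" using e(1) it by auto
    moreover have "p = ((i, l t), (i, r t))" using e(2) it by simp
    ultimately show "\<exists>i a b. (i = 1 \<or> i = 2) \<and> p = ((i, a), i, b)" by blast
  qed
  show "sided \<theta>" by fact
  show "sideP 1 (imgC l r (glue W)) = sideP 1 \<theta>" using assms(2)[of 1] sideP_imgC side_glue[of 1 W] by metis
  show "sideP 2 (imgC l r (glue W)) = sideP 2 \<theta>" using assms(2)[of 2] sideP_imgC side_glue[of 2 W] by metis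
qed

lemma glue_cfg:
  assumes T: "is_es T" and W: "\<And>i. i = 1 \<or> i = 2 \<Longrightarrow> config T (W i)"
    and cc: "b \<Longrightarrow> (\<And>i t. i = 1 \<or> i = 2 \<Longrightarrow> t \<in> W i \<Longrightarrow> pol (dual_par T) (i,t) \<Longrightarrow> t \<in> W (3 - i))"
  shows "cfgG b T (glue W)"
  unfolding cfgG_def
proof (intro conjI impI allI)
  show "glue W \<subseteq> ev (dual_par T)"
  proof
    fix p assume "p \<in> glue W"
    then obtain i t where p: "p = (i,t)" "i = 1 \<or> i = 2" "t \<in> W i" by (cases p) auto
    then have "t \<in> ev T" using config_ev[OF T W[OF p(2)]] by blast
    then show "p \<in> ev (dual_par T)" using p by simp
  qed
  show "config T (side 1 (glue W))" using W[of 1] side_glue[of 1 W] by simp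
  show "config T (side 2 (glue W))" using W[of 2] side_glue[of 2 W] by simp
  fix i t assume "b" "(i, t) \<in> glue W \<and> pol (dual_par T) (i, t)"
  then have "i = 1 \<or> i = 2" "t \<in> W i" "pol (dual_par T) (i,t)" by auto
  moreover have "3 - i = 1 \<or> 3 - i = 2" using calculation(1) by auto
  ultimately show "(3 - i, t) \<in> glue W" using cc[OF \<open>b\<close>] by simp
qed

lemma sym_fam_iff: "\<theta> \<in> sym_fam T l r \<longleftrightarrow> (\<exists>w. config T w \<and> \<theta> = imgT l r w)"
  unfolding sym_fam_def imgT_def by blast

lemma iso_p1: "iso_family E S \<Longrightarrow> (\<forall>\<theta>\<in>S. config E (fst ` \<theta>) \<and> config E (snd ` \<theta>) \<and> bij_rel \<theta>)"
  unfolding iso_family_def by (elim conjE) assumption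
lemma iso_p2: "iso_family E S \<Longrightarrow> (\<forall>x. config E x \<longrightarrow> Id_on x \<in> S)"
  unfolding iso_family_def by (elim conjE) assumption
lemma iso_p3: "iso_family E S \<Longrightarrow> (\<forall>\<theta>\<in>S. \<theta>\<inverse> \<in> S)"
  unfolding iso_family_def by (elim conjE) assumption
lemma iso_p4: "iso_family E S \<Longrightarrow> (\<forall>\<theta> \<phi>. \<theta> \<in> S \<and> \<phi> \<in> S \<and> snd ` \<theta> = fst ` \<phi> \<longrightarrow> \<theta> O \<phi> \<in> S)"
  unfolding iso_family_def by (elim conjE) assumption
lemma iso_p5: "iso_family E S \<Longrightarrow> (\<forall>\<theta> x. \<theta> \<in> S \<and> config E x \<and> x \<subseteq> fst ` \<theta> \<longrightarrow> {p\<in>\<theta>. fst p \<in> x} \<in> S)"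
  unfolding iso_family_def by (elim conjE) assumption
lemma iso_p6: "iso_family E S \<Longrightarrow> (\<forall>\<theta> y. \<theta> \<in> S \<and> config E y \<and> fst ` \<theta> \<subseteq> y \<longrightarrow>
        (\<exists>\<theta>'\<in>S. \<theta> \<subseteq> \<theta>' \<and> fst ` \<theta>' = y))"
  unfolding iso_family_def by (elim conjE) assumption

lemma iso_familyI:
  assumes "(\<forall>\<theta>\<in>S. config E (fst ` \<theta>) \<and> config E (snd ` \<theta>) \<and> bij_rel \<theta>)"
    "(\<forall>x. config E x \<longrightarrow> Id_on x \<in> S)"
    "(\<forall>\<theta>\<in>S. \<theta>\<inverse> \<in> S)"
    "(\<forall>\<theta> \<phi>. \<theta> \<in> S \<and> \<phi> \<in> S \<and> snd ` \<theta> = fst ` \<phi> \<longrightarrow> \<theta> O \<phi> \<in> S)"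
    "(\<forall>\<theta> x. \<theta> \<in> S \<and> config E x \<and> x \<subseteq> fst ` \<theta> \<longrightarrow> {p\<in>\<theta>. fst p \<in> x} \<in> S)"
    "(\<forall>\<theta> y. \<theta> \<in> S \<and> config E y \<and> fst ` \<theta> \<subseteq> y \<longrightarrow> (\<exists>\<theta>'\<in>S. \<theta> \<subseteq> \<theta>' \<and> fst ` \<theta>' = y))"
  shows "iso_family E S"
  unfolding iso_family_def by (intro conjI) (rule assms)+

locale ccs =
  fixes A :: "'a esp" and T :: "'t esp" and l r :: "'t \<Rightarrow> 'a"
  assumes A: "is_es A" and T: "is_es T"
    and lmap: "es_map T A l" and rmap: "es_map T A r"
    and lrig: "rigid T A l" and rrig: "rigid T A r"
    and lpol: "\<And>t. t \<in> ev T \<Longrightarrow> pol A (l t) = pol T t"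
    and rpol: "\<And>t. t \<in> ev T \<Longrightarrow> pol A (r t) = pol T t"
    and mono: "inj_on (\<lambda>e. (l e, r e)) (ev T)"
    and iso: "iso_family A (sym_fam T l r)"
    and lopen: "open_map T A l"
    and race: "race_preserving A T l"
begin

definition SG :: "bool \<Rightarrow> ((nat \<times> 'a) \<times> (nat \<times> 'a)) set set" where
  "SG b = {imgC l r x | x. cfgG b T x}"

lemma SG_iff: "\<theta> \<in> SG b \<longleftrightarrow> (\<exists>x. cfgG b T x \<and> \<theta> = imgC l r x)"
  unfolding SG_def by blast

lemma mono_eq: "s \<in> ev T \<Longrightarrow> t \<in> ev T \<Longrightarrow> l s = l t \<Longrightarrow> r s = r t \<Longrightarrow> s = t"
  using mono unfolding inj_on_def by blast

lemma imgT_in: "(l s, r s) \<in> imgT l r w \<Longrightarrow> s \<in> ev T \<Longrightarrow> w \<subseteq> ev T \<Longrightarrow> s \<in> w"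
  unfolding imgT_mem using mono_eq by blast

lemma imgT_S: "config T w \<Longrightarrow> imgT l r w \<in> sym_fam T l r"
  using sym_fam_iff by blast

lemma polmap:
  assumes f: "\<And>t. t \<in> ev T \<Longrightarrow> pol A (f t) = pol T t" and t: "t \<in> ev T"
  shows "pol (dual_par A) (i, f t) = pol (dual_par T) (i, t)"
  using f[OF t] by simp

lemma gen_cfg_map:
  assumes fm: "es_map T A f" and fp: "\<And>t. t \<in> ev T \<Longrightarrow> pol A (f t) = pol T t"
    and c: "cfgG b T x"
  shows "cfgG b A (cc_map f ` x) \<and> inj_on (cc_map f) x"
proof
  have X: "x \<subseteq> ev (dual_par T)" using cfgG_ev[OF c] .
  have sx: "config A (side i (cc_map f ` x))" if "i = 1 \<or> i = 2" for i
    using esmap_cfg[OF fm cfgG_side[OF c that]] side_image[of i f x] by simp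
  have ev: "cc_map f ` x \<subseteq> ev (dual_par A)"
  proof
    fix p assume "p \<in> cc_map f ` x"
    then obtain i t where it: "(i,t) \<in> x" "p = (i, f t)" by auto
    then have "(i = 1 \<or> i = 2) \<and> t \<in> ev T" using X by auto
    then show "p \<in> ev (dual_par A)" using it esmap_ev[OF fm] by simp
  qed
  have cc: "(3 - i, a) \<in> cc_map f ` x" if b: "b" and h: "(i,a) \<in> cc_map f ` x" "pol (dual_par A) (i,a)" for i a
  proof -
    obtain t where t: "(i,t) \<in> x" "a = f t" using h(1) by auto
    have "t \<in> ev T" using X t(1) by auto
    then have "pol (dual_par T) (i,t)" using polmap[OF fp] h(2) t(2) by metis
    moreover have "cfgG True T x" using c b by simp
    ultimately have "(3 - i, t) \<in> x" using cfgG_cc[of T x i t] t(1) by blast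
    then have "cc_map f (3 - i, t) \<in> cc_map f ` x" by (rule imageI)
    then show ?thesis using t(2) by simp
  qed
  show "cfgG b A (cc_map f ` x)" unfolding cfgG_def using ev sx cc by blast
  show "inj_on (cc_map f) x"
  proof (rule inj_onI)
    fix p q assume pq: "p \<in> x" "q \<in> x" "cc_map f p = cc_map f q"
    obtain i t j s where ij: "p = (i,t)" "q = (j,s)" by (cases p, cases q)
    then have "i = j" "f t = f s" using pq(3) by auto
    moreover have "i = 1 \<or> i = 2" using X pq(1) ij(1) by auto
    moreover have "t \<in> side i x" "s \<in> side i x" using pq ij \<open>i = j\<close> by auto
    ultimately have "t = s" using esmap_inj[OF fm cfgG_side[OF c]] unfolding inj_on_def by blast
    then show "p = q" using ij \<open>i = j\<close> by simp
  qed
qed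

lemma fst_imgC: "fst ` imgC l r x = cc_map l ` x" unfolding imgC_def by force
lemma snd_imgC: "snd ` imgC l r x = cc_map r ` x" unfolding imgC_def by force

lemma imgC_memI: "(i,t) \<in> x \<Longrightarrow> ((i, l t), (i, r t)) \<in> imgC l r x"
  unfolding imgC_def by force

lemma imgC_mono:
  assumes "imgC l r x \<subseteq> imgC l r z" "x \<subseteq> ev (dual_par T)" "z \<subseteq> ev (dual_par T)"
  shows "x \<subseteq> z"
proof
  fix e assume e: "e \<in> x"
  obtain i t where it: "e = (i,t)" by (cases e)
  have "((i, l t),(i, r t)) \<in> imgC l r z" using assms(1) imgC_memI[of i t x] e it by blast
  then obtain s where s: "(i,s) \<in> z" "l t = l s" "r t = r s" using imgC_mem[of i "l t" i "r t" l r z] by blast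
  have "t \<in> ev T" "s \<in> ev T" using assms(2,3) e it s(1) by auto
  then have "t = s" using mono_eq s by blast
  then show "e \<in> z" using s it by simp
qed


end




lemma imgT_memI: "t \<in> w \<Longrightarrow> (l t, r t) \<in> imgT l r w"
  unfolding imgT_def by blast

lemma fst_imgT: "fst ` imgT l r w = l ` w" unfolding imgT_def by force
lemma snd_imgT: "snd ` imgT l r w = r ` w" unfolding imgT_def by force

lemma sided_conv: "sided \<theta> \<Longrightarrow> sided (\<theta>\<inverse>)"
  unfolding sided_def by fastforce

lemma sideP_conv: "sideP i (\<theta>\<inverse>) = (sideP i \<theta>)\<inverse>"
  unfolding sideP_def by auto

lemma sided_comp: assumes "sided \<theta>" "sided \<phi>" shows "sided (\<theta> O \<phi>)"
  unfolding sided_def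
proof
  fix p assume "p \<in> \<theta> O \<phi>"
  then obtain a b c where abc: "p = (a,c)" "(a,b) \<in> \<theta>" "(b,c) \<in> \<phi>" by blast
  obtain i a' b' where 1: "i = 1 \<or> i = 2" "(a,b) = ((i,a'),(i,b'))" using assms(1) abc(2) unfolding sided_def by blast
  obtain j b'' c' where 2: "j = 1 \<or> j = 2" "(b,c) = ((j,b''),(j,c'))" using assms(2) abc(3) unfolding sided_def by blast
  have "i = j" using 1 2 by simp
  then have "p = ((i,a'),(i,c'))" using 1 2 abc(1) by simp
  then show "\<exists>i a b. (i = 1 \<or> i = 2) \<and> p = ((i, a), i, b)" using 1(1) by blast
qed

lemma sideP_comp: assumes "sided \<theta>" shows "sideP i (\<theta> O \<phi>) = sideP i \<theta> O sideP i \<phi>"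
proof (rule set_eqI)
  fix p :: "'a \<times> 'a"
  obtain a c where p: "p = (a,c)" by (cases p)
  have "p \<in> sideP i (\<theta> O \<phi>) \<longleftrightarrow> (\<exists>m. ((i,a),m) \<in> \<theta> \<and> (m,(i,c)) \<in> \<phi>)"
    unfolding sideP_def p by blast
  also have "\<dots> \<longleftrightarrow> (\<exists>b. ((i,a),(i,b)) \<in> \<theta> \<and> ((i,b),(i,c)) \<in> \<phi>)"
  proof
    assume "\<exists>m. ((i,a),m) \<in> \<theta> \<and> (m,(i,c)) \<in> \<phi>"
    then obtain m where m: "((i,a),m) \<in> \<theta>" "(m,(i,c)) \<in> \<phi>" by blast
    obtain j a' b' where "((i,a),m) = ((j,a'),(j,b'))" using assms m(1) unfolding sided_def by blast
    then have "m = (i,b')" by simp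
    then show "\<exists>b. ((i,a),(i,b)) \<in> \<theta> \<and> ((i,b),(i,c)) \<in> \<phi>" using m by blast
  next
    assume "\<exists>b. ((i,a),(i,b)) \<in> \<theta> \<and> ((i,b),(i,c)) \<in> \<phi>"
    then show "\<exists>m. ((i,a),m) \<in> \<theta> \<and> (m,(i,c)) \<in> \<phi>" by blast
  qed
  also have "\<dots> \<longleftrightarrow> p \<in> sideP i \<theta> O sideP i \<phi>" unfolding sideP_def p by blast
  finally show "p \<in> sideP i (\<theta> O \<phi>) \<longleftrightarrow> p \<in> sideP i \<theta> O sideP i \<phi>" .
qed

lemma sided_Id: assumes "y \<subseteq> ev (dual_par E)" shows "sided (Id_on y)"
  unfolding sided_def
proof
  fix p assume "p \<in> Id_on y"
  then obtain e where e: "e \<in> y" "p = (e,e)" by blast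
  obtain i a where ia: "e = (i,a)" by (cases e)
  have "i = 1 \<or> i = 2" using assms e(1) ia by auto
  then show "\<exists>i a b. (i = 1 \<or> i = 2) \<and> p = ((i, a), i, b)" using e ia by blast
qed

lemma sideP_Id: "sideP i (Id_on y) = Id_on (side i y)"
  unfolding sideP_def by auto

lemma choose_W:
  assumes "\<And>i. i = 1 \<or> i = 2 \<Longrightarrow> \<Phi> i \<in> sym_fam T l r"
  obtains W where "\<And>i. i = 1 \<or> i = 2 \<Longrightarrow> config T (W i) \<and> imgT l r (W i) = \<Phi> i"
proof -
  have "\<forall>i. \<exists>w. (i = 1 \<or> i = 2) \<longrightarrow> config T w \<and> imgT l r w = \<Phi> i"
  proof
    fix i show "\<exists>w. (i = 1 \<or> i = 2) \<longrightarrow> config T w \<and> imgT l r w = \<Phi> i"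
    proof (cases "i = 1 \<or> i = 2")
      case True
      then obtain w where "config T w" "\<Phi> i = imgT l r w" using assms[OF True] sym_fam_iff[of "\<Phi> i" T l r] by blast
      then show ?thesis by blast
    next
      case False then show ?thesis by blast
    qed
  qed
  then obtain W where "\<forall>i. (i = 1 \<or> i = 2) \<longrightarrow> config T (W i) \<and> imgT l r (W i) = \<Phi> i"
    using choice[of "\<lambda>i w. (i = 1 \<or> i = 2) \<longrightarrow> config T w \<and> imgT l r w = \<Phi> i"] by blast
  then show thesis using that by blast
qed

lemma choose_W':
  assumes "\<And>i. i = 1 \<or> i = 2 \<Longrightarrow> \<Phi> i \<in> sym_fam T l r"
  shows "\<exists>W. \<forall>i. i = 1 \<or> i = 2 \<longrightarrow> config T (W i) \<and> imgT l r (W i) = \<Phi> i"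
proof -
  have "\<forall>i. \<exists>w. (i = 1 \<or> i = 2) \<longrightarrow> config T w \<and> imgT l r w = \<Phi> i"
  proof
    fix i show "\<exists>w. (i = 1 \<or> i = 2) \<longrightarrow> config T w \<and> imgT l r w = \<Phi> i"
    proof (cases "i = 1 \<or> i = 2")
      case True
      then obtain w where "config T w" "\<Phi> i = imgT l r w" using assms[OF True] sym_fam_iff[of "\<Phi> i" T l r] by blast
      then show ?thesis by blast
    next
      case False then show ?thesis by blast
    qed
  qed
  then show ?thesis by (rule choice)
qed

lemma pol_dual_eq: "pol E s = pol E t \<Longrightarrow> pol (dual_par E) (i,s) = pol (dual_par E) (i,t)"
  by simp

lemma i3: "(i::nat) = 1 \<or> i = 2 \<Longrightarrow> 3 - i = 1 \<or> 3 - i = 2" by auto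

context ccs begin

lemma pol_lr: "t \<in> ev T \<Longrightarrow> pol (dual_par A) (i, l t) = pol (dual_par T) (i,t)"
  using lpol by simp
lemma pol_rr: "t \<in> ev T \<Longrightarrow> pol (dual_par A) (i, r t) = pol (dual_par T) (i,t)"
  using rpol by simp

lemma SG_props1:
  assumes c: "cfgG b T x"
  shows "cfgG b A (fst ` imgC l r x) \<and> cfgG b A (snd ` imgC l r x) \<and> bij_rel (imgC l r x)"
proof (intro conjI)
  show "cfgG b A (fst ` imgC l r x)" using gen_cfg_map[OF lmap lpol c] fst_imgC by simp
  show "cfgG b A (snd ` imgC l r x)" using gen_cfg_map[OF rmap rpol c] snd_imgC by simp
  have il: "inj_on (cc_map l) x" using gen_cfg_map[OF lmap lpol c] by simp
  have ir: "inj_on (cc_map r) x" using gen_cfg_map[OF rmap rpol c] by simp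
  show "bij_rel (imgC l r x)" unfolding bij_rel_def
  proof (intro conjI allI impI)
    fix a b d assume h: "(a, b) \<in> imgC l r x \<and> (a, d) \<in> imgC l r x"
    then obtain e1 e2 where e: "e1 \<in> x" "(a,b) = (cc_map l e1, cc_map r e1)" "e2 \<in> x" "(a,d) = (cc_map l e2, cc_map r e2)"
      unfolding imgC_def by blast
    then have "e1 = e2" using il unfolding inj_on_def by simp
    then show "b = d" using e by simp
  next
    fix a b d assume h: "(a, d) \<in> imgC l r x \<and> (b, d) \<in> imgC l r x"
    then obtain e1 e2 where e: "e1 \<in> x" "(a,d) = (cc_map l e1, cc_map r e1)" "e2 \<in> x" "(b,d) = (cc_map l e2, cc_map r e2)"
      unfolding imgC_def by blast
    then have "e1 = e2" using ir unfolding inj_on_def by simp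
    then show "a = b" using e by simp
  qed
qed

lemma SG_id: assumes y: "cfgG b A y" shows "Id_on y \<in> SG b"
proof -
  have Y: "y \<subseteq> ev (dual_par A)" using cfgG_ev[OF y] .
  have "Id_on (side i y) \<in> sym_fam T l r" if "i = 1 \<or> i = 2" for i
    using iso_p2[OF iso] cfgG_side[OF y that] by blast
  then have "\<exists>W. \<forall>i. i = 1 \<or> i = 2 \<longrightarrow> config T (W i) \<and> imgT l r (W i) = Id_on (side i y)" by (rule choose_W')
  then obtain W where W0: "\<forall>i. i = 1 \<or> i = 2 \<longrightarrow> config T (W i) \<and> imgT l r (W i) = Id_on (side i y)" by blast
  have W: "\<And>i. i = 1 \<or> i = 2 \<Longrightarrow> config T (W i) \<and> imgT l r (W i) = Id_on (side i y)" using W0 by blast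
  have img: "imgC l r (glue W) = Id_on y"
  proof (rule imgC_glue)
    show "sided (Id_on y)" using sided_Id[OF Y] .
    fix i :: nat assume "i = 1 \<or> i = 2"
    then show "imgT l r (W i) = sideP i (Id_on y)" using W sideP_Id by metis
  qed
  have cfg: "cfgG b T (glue W)"
  proof (rule glue_cfg[OF T])
    show "config T (W i)" if "i = 1 \<or> i = 2" for i using W[OF that] by blast
    fix i :: nat and t assume b: "b" and i: "i = 1 \<or> i = 2" and t: "t \<in> W i" and p: "pol (dual_par T) (i, t)"
    have tev: "t \<in> ev T" using config_ev[OF T] W[OF i] t by blast
    have "(l t, r t) \<in> Id_on (side i y)" using imgT_memI[OF t, of l r] W[OF i] by simp
    then have lr: "l t = r t" "(i, l t) \<in> y" by auto
    have "pol (dual_par A) (i, l t)" using pol_lr[OF tev] p by simp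
    moreover have "cfgG True A y" using y b by simp
    ultimately have "(3 - i, l t) \<in> y" using cfgG_cc[of A y i "l t"] lr(2) by blast
    then have "(l t, r t) \<in> Id_on (side (3 - i) y)" using lr(1) by auto
    then have "(l t, r t) \<in> imgT l r (W (3 - i))" using W[OF i3[OF i]] by simp
    then show "t \<in> W (3 - i)" using imgT_in tev config_ev[OF T] W[OF i3[OF i]] by blast
  qed
  show ?thesis using SG_iff img cfg by blast
qed

lemma SG_inv: assumes th: "\<theta> \<in> SG b" shows "\<theta>\<inverse> \<in> SG b"
proof -
  obtain x where x: "cfgG b T x" "\<theta> = imgC l r x" using th SG_iff by blast
  have X: "x \<subseteq> ev (dual_par T)" using cfgG_ev[OF x(1)] .
  have sd: "sided \<theta>" using sided_imgC[OF X] x(2) by simp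
  have "(imgT l r (side i x))\<inverse> \<in> sym_fam T l r" if "i = 1 \<or> i = 2" for i
    using iso_p3[OF iso] imgT_S[OF cfgG_side[OF x(1) that]] by blast
  then have "\<exists>W. \<forall>i. i = 1 \<or> i = 2 \<longrightarrow> config T (W i) \<and> imgT l r (W i) = (imgT l r (side i x))\<inverse>" by (rule choose_W')
  then obtain W where W0: "\<forall>i. i = 1 \<or> i = 2 \<longrightarrow> config T (W i) \<and> imgT l r (W i) = (imgT l r (side i x))\<inverse>" by blast
  have W: "\<And>i. i = 1 \<or> i = 2 \<Longrightarrow> config T (W i) \<and> imgT l r (W i) = (imgT l r (side i x))\<inverse>" using W0 by blast
  have img: "imgC l r (glue W) = \<theta>\<inverse>"
  proof (rule imgC_glue)
    show "sided (\<theta>\<inverse>)" using sided_conv[OF sd] .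
    fix i :: nat assume "i = 1 \<or> i = 2"
    then show "imgT l r (W i) = sideP i (\<theta>\<inverse>)" using W sideP_conv sideP_imgC x(2) by metis
  qed
  have cfg: "cfgG b T (glue W)"
  proof (rule glue_cfg[OF T])
    show "config T (W i)" if "i = 1 \<or> i = 2" for i using W[OF that] by blast
    fix i :: nat and s assume b: "b" and i: "i = 1 \<or> i = 2" and s: "s \<in> W i" and p: "pol (dual_par T) (i, s)"
    have sev: "s \<in> ev T" using config_ev[OF T] W[OF i] s by blast
    have "(l s, r s) \<in> (imgT l r (side i x))\<inverse>" using imgT_memI[OF s, of l r] W[OF i] by simp
    then have "(r s, l s) \<in> imgT l r (side i x)" by simp
    then obtain t where t: "(i,t) \<in> x" "r s = l t" "l s = r t" unfolding imgT_mem by auto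
    have tev: "t \<in> ev T" using X t(1) by auto
    have "pol T s = pol T t" using lpol[OF sev] rpol[OF tev] t(3) by simp
    then have "pol (dual_par T) (i,t)" using p pol_dual_eq[of T s t i] by simp
    moreover have "cfgG True T x" using x(1) b by simp
    ultimately have "(3 - i, t) \<in> x" using cfgG_cc[of T x i t] t(1) by blast
    then have "(l t, r t) \<in> imgT l r (side (3 - i) x)" using imgT_memI[of t "side (3 - i) x" l r] by simp
    then have "(l s, r s) \<in> imgT l r (W (3 - i))" using W[OF i3[OF i]] t by simp
    then show "s \<in> W (3 - i)" using imgT_in sev config_ev[OF T] W[OF i3[OF i]] by blast
  qed
  show ?thesis using SG_iff img cfg by blast
qed

lemma SG_comp:
  assumes th: "\<theta> \<in> SG b" and ph: "\<phi> \<in> SG b" and e: "snd ` \<theta> = fst ` \<phi>"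
  shows "\<theta> O \<phi> \<in> SG b"
proof -
  obtain x where x: "cfgG b T x" "\<theta> = imgC l r x" using th SG_iff by blast
  obtain x' where x': "cfgG b T x'" "\<phi> = imgC l r x'" using ph SG_iff by blast
  have X: "x \<subseteq> ev (dual_par T)" using cfgG_ev[OF x(1)] .
  have X': "x' \<subseteq> ev (dual_par T)" using cfgG_ev[OF x'(1)] .
  have sd: "sided \<theta>" using sided_imgC[OF X] x(2) by simp
  have sd': "sided \<phi>" using sided_imgC[OF X'] x'(2) by simp
  have "cc_map r ` x = cc_map l ` x'" using e unfolding x(2) x'(2) snd_imgC fst_imgC .
  then have "r ` side i x = l ` side i x'" for i using side_image[of i r x] side_image[of i l x'] by simp
  then have ee: "snd ` imgT l r (side i x) = fst ` imgT l r (side i x')" for i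
    unfolding snd_imgT fst_imgT by blast
  have "imgT l r (side i x) O imgT l r (side i x') \<in> sym_fam T l r" if i: "i = 1 \<or> i = 2" for i
  proof -
    have a: "imgT l r (side i x) \<in> sym_fam T l r" using imgT_S[OF cfgG_side[OF x(1) i]] .
    have b: "imgT l r (side i x') \<in> sym_fam T l r" using imgT_S[OF cfgG_side[OF x'(1) i]] .
    show ?thesis using iso_p4[OF iso] a b ee[of i] by blast
  qed
  then have "\<exists>W. \<forall>i. i = 1 \<or> i = 2 \<longrightarrow> config T (W i) \<and>
      imgT l r (W i) = imgT l r (side i x) O imgT l r (side i x')" by (rule choose_W')
  then obtain W where W0: "\<forall>i. i = 1 \<or> i = 2 \<longrightarrow> config T (W i) \<and>
      imgT l r (W i) = imgT l r (side i x) O imgT l r (side i x')" by blast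
  have W: "\<And>i. i = 1 \<or> i = 2 \<Longrightarrow> config T (W i) \<and>
      imgT l r (W i) = imgT l r (side i x) O imgT l r (side i x')" using W0 by blast
  have img: "imgC l r (glue W) = \<theta> O \<phi>"
  proof (rule imgC_glue)
    show "sided (\<theta> O \<phi>)" using sided_comp[OF sd sd'] .
    fix i :: nat assume "i = 1 \<or> i = 2"
    then show "imgT l r (W i) = sideP i (\<theta> O \<phi>)" using W sideP_comp[OF sd] sideP_imgC x(2) x'(2) by metis
  qed
  have cfg: "cfgG b T (glue W)"
  proof (rule glue_cfg[OF T])
    show "config T (W i)" if "i = 1 \<or> i = 2" for i using W[OF that] by blast
    fix i :: nat and s assume b: "b" and i: "i = 1 \<or> i = 2" and s: "s \<in> W i" and p: "pol (dual_par T) (i, s)"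
    have sev: "s \<in> ev T" using config_ev[OF T] W[OF i] s by blast
    have "(l s, r s) \<in> imgT l r (side i x) O imgT l r (side i x')" using imgT_memI[OF s, of l r] W[OF i] by simp
    then obtain m where m: "(l s, m) \<in> imgT l r (side i x)" "(m, r s) \<in> imgT l r (side i x')" by blast
    obtain t where t: "(i,t) \<in> x" "l s = l t" "m = r t" using m(1) unfolding imgT_mem by auto
    obtain t' where t': "(i,t') \<in> x'" "m = l t'" "r s = r t'" using m(2) unfolding imgT_mem by auto
    have tev: "t \<in> ev T" using X t(1) by auto
    have tev': "t' \<in> ev T" using X' t'(1) by auto
    have "pol T s = pol T t" using lpol[OF sev] lpol[OF tev] t(2) by simp
    moreover have "pol T t' = pol T t" using lpol[OF tev'] rpol[OF tev] t(3) t'(2) by simp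
    ultimately have pp: "pol (dual_par T) (i,t)" "pol (dual_par T) (i,t')"
      using p pol_dual_eq[of T s t i] pol_dual_eq[of T t' t i] by simp_all
    have xx: "cfgG True T x" "cfgG True T x'" using x(1) x'(1) b by simp_all
    have "(3 - i, t) \<in> x" using cfgG_cc[OF xx(1) t(1) pp(1)] .
    moreover have "(3 - i, t') \<in> x'" using cfgG_cc[OF xx(2) t'(1) pp(2)] .
    ultimately have "(l t, r t) \<in> imgT l r (side (3 - i) x)" "(l t', r t') \<in> imgT l r (side (3 - i) x')"
      using imgT_memI by (simp_all add: imgT_memI)
    then have "(l s, r s) \<in> imgT l r (side (3 - i) x) O imgT l r (side (3 - i) x')"
      using t t' by auto
    then have "(l s, r s) \<in> imgT l r (W (3 - i))" using W[OF i3[OF i]] by simp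
    then show "s \<in> W (3 - i)" using imgT_in sev config_ev[OF T] W[OF i3[OF i]] by blast
  qed
  show ?thesis using SG_iff img cfg by blast
qed

lemma SG_restr:
  assumes th: "\<theta> \<in> SG b" and y: "cfgG b A y"
  shows "{p\<in>\<theta>. fst p \<in> y} \<in> SG b"
proof -
  obtain x where x: "cfgG b T x" "\<theta> = imgC l r x" using th SG_iff by blast
  have X: "x \<subseteq> ev (dual_par T)" using cfgG_ev[OF x(1)] .
  define x0 where "x0 = {e\<in>x. cc_map l e \<in> y}"
  have img: "{p\<in>\<theta>. fst p \<in> y} = imgC l r x0" unfolding x(2) x0_def imgC_def by auto
  have s0: "side i x0 = {t \<in> side i x. l t \<in> side i y}" for i unfolding x0_def by auto
  have cs: "config T (side i x0)" if i: "i = 1 \<or> i = 2" for i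
  proof (rule configI)
    have "side i x0 \<subseteq> side i x" using s0 by blast
    then show "side i x0 \<in> con T" using es_sub[OF T config_con[OF cfgG_side[OF x(1) i]]] by blast
    fix a c assume c: "c \<in> side i x0" "leq T a c"
    have "a \<in> side i x" using config_down[OF cfgG_side[OF x(1) i], of c a] c s0 by blast
    moreover have "leq A (l a) (l c)" using lrig c(2) unfolding rigid_def by blast
    then have "l a \<in> side i y" using config_down[OF cfgG_side[OF y i], of "l c" "l a"] c s0 by blast
    ultimately show "a \<in> side i x0" using s0 by blast
  qed
  have "cfgG b T x0" unfolding cfgG_def
  proof (intro conjI impI allI)
    show "x0 \<subseteq> ev (dual_par T)" using X unfolding x0_def by blast
    show "config T (side 1 x0)" using cs by simp
    show "config T (side 2 x0)" using cs by simp
    fix i t assume b: "b" and h: "(i, t) \<in> x0 \<and> pol (dual_par T) (i, t)"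
    have xx: "cfgG True T x" "cfgG True A y" using x(1) y b by simp_all
    have it: "(i,t) \<in> x" "(i, l t) \<in> y" using h unfolding x0_def by auto
    have tev: "t \<in> ev T" using X it(1) by auto
    have "(3 - i, t) \<in> x" using cfgG_cc[OF xx(1) it(1)] h by blast
    moreover have "(3 - i, l t) \<in> y" using cfgG_cc[OF xx(2) it(2)] h pol_lr[OF tev] by simp
    ultimately show "(3 - i, t) \<in> x0" unfolding x0_def by simp
  qed
  then show ?thesis using SG_iff img by blast
qed

end



lemma ex_max_fin:
  fixes f :: "'a \<Rightarrow> nat"
  assumes "finite S" "S \<noteq> {}"
  obtains e where "e \<in> S" "\<And>e'. e' \<in> S \<Longrightarrow> f e' \<le> f e"
proof -
  have "Max (f ` S) \<in> f ` S" using assms by simp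
  then obtain e where e: "e \<in> S" "f e = Max (f ` S)" by auto
  have "f e' \<le> f e" if "e' \<in> S" for e' using e(2) assms(1) that by simp
  then show thesis using that e(1) by blast
qed

lemma ex_min_fin:
  fixes f :: "'a \<Rightarrow> nat"
  assumes "finite S" "S \<noteq> {}"
  obtains e where "e \<in> S" "\<And>e'. e' \<in> S \<Longrightarrow> f e \<le> f e'"
proof -
  have "Min (f ` S) \<in> f ` S" using assms by simp
  then obtain e where e: "e \<in> S" "f e = Min (f ` S)" by auto
  have "f e \<le> f e'" if "e' \<in> S" for e' using e(2) assms(1) that by simp
  then show thesis using that e(1) by blast
qed

lemma three_minus: "(i::nat) = 1 \<or> i = 2 \<Longrightarrow> 3 - (3 - i) = i" by auto

context ccs begin

lemma config_insert_down:
  assumes v: "config T v" and c: "insert t v \<in> con T" and t: "t \<in> ev T"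
    and past: "\<And>t'. leq T t' t \<Longrightarrow> t' \<noteq> t \<Longrightarrow> t' \<in> v"
  shows "config T (insert t v)"
proof (rule configI)
  show "insert t v \<in> con T" by fact
  fix a c assume h: "c \<in> insert t v" "leq T a c"
  show "a \<in> insert t v"
  proof (cases "c = t")
    case True
    then show ?thesis using past h(2) by blast
  next
    case False
    then have "c \<in> v" using h(1) by blast
    then show ?thesis using config_down[OF v _ h(2)] by blast
  qed
qed

lemma image_config:
  assumes v: "config T v" and t: "t \<in> ev T" and past: "\<And>t'. leq T t' t \<Longrightarrow> t' \<noteq> t \<Longrightarrow> t' \<in> v"
    and Y: "config A Y" and sub: "insert (l t) (l ` v) \<subseteq> Y"
  shows "config A (insert (l t) (l ` v))"
proof (rule configI)
  show "insert (l t) (l ` v) \<in> con A" using es_sub[OF A config_con[OF Y] sub] .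
  fix a c assume h: "c \<in> insert (l t) (l ` v)" "leq A a c"
  show "a \<in> insert (l t) (l ` v)"
  proof (cases "c = l t")
    case True
    have dc: "config T {b. leq T b t}" using config_dc[OF T t] .
    have "t \<in> {b. leq T b t}" using es_refl[OF T t] by simp
    then have "a \<in> l ` {b. leq T b t}" using esmap_below[OF lmap dc] h(2) True by blast
    then obtain b where b: "leq T b t" "a = l b" by blast
    show ?thesis
    proof (cases "b = t")
      case True then show ?thesis using b by simp
    next
      case False then have "b \<in> v" using past b(1) by blast
      then show ?thesis using b by blast
    qed
  next
    case False
    then obtain s where s: "s \<in> v" "c = l s" using h(1) by blast
    have "a \<in> l ` v" using esmap_below[OF lmap v s(1)] h(2) s(2) by blast
    then show ?thesis by blast
  qed
qed

lemma one_step_pos: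
  assumes x: "cfgG True T x" and i: "i = 1 \<or> i = 2" and tev: "t \<in> ev T"
    and pt: "pol (dual_par T) (i,t)" and m: "(3 - i, t) \<in> x" and n: "(i,t) \<notin> x"
    and Y: "config A (insert (l t) (l ` side i x))"
  shows "cfgG True T (insert (i,t) x)"
proof -
  define X where "X = side i x"
  define X' where "X' = side (3 - i) x"
  have i': "3 - i = 1 \<or> 3 - i = 2" using i by auto
  have cX: "config T X" unfolding X_def using cfgG_side[OF x i] .
  have cX': "config T X'" unfolding X'_def using cfgG_side[OF x i'] .
  have tX': "t \<in> X'" unfolding X'_def using m by simp
  have tX: "t \<notin> X" unfolding X_def using n by simp
  have injX': "inj_on l X'" using esmap_inj[OF lmap cX'] .
  have pastX: "t' \<in> X \<and> t' \<in> X'" if "leq T t' t" "t' \<noteq> t" for t'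
  proof -
    have t'X': "t' \<in> X'" using config_down[OF cX' tX' that(1)] .
    have t'ev: "t' \<in> ev T" using es_leq_ev[OF T that(1)] by simp
    have "t' \<in> X"
    proof (cases "pol (dual_par T) (3 - i, t')")
      case True
      have "(3 - (3 - i), t') \<in> x" using cfgG_cc[OF x _ True] t'X' unfolding X'_def by simp
      then show ?thesis unfolding X_def using three_minus[OF i] by simp
    next
      case False
      then have pi: "pol (dual_par T) (i, t')" using pol_dual_swap[OF i, of T t'] by simp
      have lle: "leq A (l t') (l t)" using lrig that(1) unfolding rigid_def by blast
      have "l t' \<noteq> l t" using injX' t'X' tX' that(2) unfolding inj_on_def by blast
      moreover have "l t' \<in> insert (l t) (l ` X)" using config_down[OF Y _ lle] unfolding X_def by simp
      ultimately have "l t' \<in> l ` X" by blast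
      then obtain s where s: "s \<in> X" "l s = l t'" by (metis imageE)
      have sev: "s \<in> ev T" using config_ev[OF T cX] s(1) by blast
      have "pol T s = pol T t'" using lpol[OF sev] lpol[OF t'ev] s(2) by simp
      then have "pol (dual_par T) (i, s)" using pi pol_dual_eq[of T s t' i] by simp
      then have "(3 - i, s) \<in> x" using cfgG_cc[OF x] s(1) unfolding X_def by simp
      then have "s \<in> X'" unfolding X'_def by simp
      then have "s = t'" using injX' t'X' s(2) unfolding inj_on_def by blast
      then show ?thesis using s(1) by simp
    qed
    then show ?thesis using t'X' by simp
  qed
  define u0 where "u0 = X \<inter> X'"
  have cu0: "config T u0" unfolding u0_def using config_int[OF T cX cX'] .
  have past0: "t' \<in> u0" if "leq T t' t" "t' \<noteq> t" for t' using pastX[OF that] unfolding u0_def by simp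
  have claim: "\<forall>v. card (v - u0) = k \<longrightarrow> config T v \<longrightarrow> u0 \<subseteq> v \<longrightarrow> v \<subseteq> X \<longrightarrow> insert t v \<in> con T" for k
  proof (induction k)
    case 0
    show ?case
    proof (intro allI impI)
      fix v assume h: "card (v - u0) = 0" "config T v" "u0 \<subseteq> v" "v \<subseteq> X"
      have "finite v" using config_fin[OF T h(2)] .
      then have "v - u0 = {}" using h(1) by simp
      then have "v = u0" using h(3) by blast
      then have "insert t v \<subseteq> X'" using tX' unfolding u0_def by blast
      then show "insert t v \<in> con T" using es_sub[OF T config_con[OF cX']] by blast
    qed
  next
    case (Suc k)
    show ?case
    proof (intro allI impI)
      fix v assume h: "card (v - u0) = Suc k" "config T v" "u0 \<subseteq> v" "v \<subseteq> X"
      have fv: "finite (v - u0)" using config_fin[OF T h(2)] by simp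
      have ne: "v - u0 \<noteq> {}"
      proof
        assume a: "v - u0 = {}"
        show False using h(1) unfolding a by simp
      qed
      obtain e where e: "e \<in> v - u0" and emax: "\<And>e'. e' \<in> v - u0 \<Longrightarrow> card {b. leq T b e'} \<le> card {b. leq T b e}"
        using ex_max_fin[OF fv ne, of "\<lambda>e. card {b. leq T b e}"] by blast
      define v0 where "v0 = v - {e}"
      have ve: "v = insert e v0" unfolding v0_def using e by blast
      have ev0: "e \<notin> v0" unfolding v0_def by simp
      have cv0: "config T v0"
      proof (rule configI)
        show "v0 \<in> con T" unfolding v0_def using es_sub[OF T config_con[OF h(2)]] by blast
        fix a c assume hc: "c \<in> v0" "leq T a c"
        have av: "a \<in> v" using config_down[OF h(2) _ hc(2)] hc(1) unfolding v0_def by blast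
        have "a \<noteq> e"
        proof
          assume ae: "a = e"
          have ce: "c \<noteq> e" using hc(1) unfolding v0_def by blast
          have "c \<notin> u0"
          proof
            assume "c \<in> u0"
            then have "e \<in> u0" using config_down[OF cu0 _ hc(2)] ae by simp
            then show False using e by blast
          qed
          then have "c \<in> v - u0" using hc(1) unfolding v0_def by blast
          then have "card {b. leq T b c} \<le> card {b. leq T b e}" using emax by blast
          moreover have "card {b. leq T b e} < card {b. leq T b c}" using card_dc_less[OF T _ ce[symmetric]] hc(2) ae by simp
          ultimately show False by simp
        qed
        then show "a \<in> v0" using av unfolding v0_def by blast
      qed
      have "card (v0 - u0) = k"
      proof -
        have "v0 - u0 = (v - u0) - {e}" unfolding v0_def by blast
        then show ?thesis using h(1) e fv by simp
      qed
      moreover have "u0 \<subseteq> v0" using h(3) e unfolding v0_def by blast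
      moreover have "v0 \<subseteq> X" using h(4) unfolding v0_def by blast
      ultimately have IH: "insert t v0 \<in> con T" using Suc.IH cv0 by blast
      show "insert t v \<in> con T"
      proof (rule ccontr)
        assume nc: "insert t v \<notin> con T"
        have eX: "e \<in> X" "e \<notin> X'" using e h(4) unfolding u0_def by blast+
        have eev: "e \<in> ev T" using config_ev[OF T cX] eX(1) by blast
        have npe: "\<not> pol (dual_par T) (i, e)"
        proof
          assume "pol (dual_par T) (i, e)"
          then have "(3 - i, e) \<in> x" using cfgG_cc[OF x] eX(1) unfolding X_def by simp
          then show False using eX(2) unfolding X'_def by simp
        qed
        have pne: "pol T e \<noteq> pol T t" using npe pt pol_dual_eq[of T e t i] by auto
        have tv0: "t \<notin> v0" using h(4) tX unfolding v0_def by blast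
        have ct: "config T (insert t v0)"
          using config_insert_down[OF cv0 IH tev] past0 \<open>u0 \<subseteq> v0\<close> by blast
        have ce: "config T (insert e v0)" using h(2) ve by simp
        have nct: "\<not> config T (insert t (insert e v0))" using nc ve config_con by auto
        have nct': "\<not> config T (insert e (insert t v0))" using nct by (simp add: insert_commute)
        have "insert (l t) (l ` v) \<subseteq> insert (l t) (l ` X)" using h(4) by blast
        then have cA: "config A (insert (l t) (l ` v))"
          using image_config[OF h(2) tev _ Y] past0 h(3) unfolding X_def by blast
        have rc: "\<forall>x e1 e2. config T x \<and> e1 \<notin> x \<and> e2 \<notin> x \<and>
            config T (insert e1 x) \<and> config T (insert e2 x) \<and>
            \<not> config T (insert e1 (insert e2 x)) \<and> \<not> pol T e1 \<and> pol T e2 \<longrightarrow>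
            \<not> config A (insert (l e1) (insert (l e2) (l ` x)))"
          using race unfolding race_preserving_def by blast
        have eq1: "insert (l t) (insert (l e) (l ` v0)) = insert (l t) (l ` v)" using ve by simp
        have eq2: "insert (l e) (insert (l t) (l ` v0)) = insert (l t) (l ` v)" using ve by auto
        show False
        proof (cases "pol T t")
          case True
          then have "\<not> pol T e" using pne by simp
          then have "\<not> config A (insert (l e) (insert (l t) (l ` v0)))"
            using rc cv0 ev0 tv0 ce ct nct' True by blast
          then show False using cA eq2 by simp
        next
          case False
          then have "pol T e" using pne by simp
          then have "\<not> config A (insert (l t) (insert (l e) (l ` v0)))"
            using rc cv0 ev0 tv0 ce ct nct False by blast
          then show False using cA eq1 by simp
        qed
      qed
    qed
  qed
  have "u0 \<subseteq> X" unfolding u0_def by blast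
  then have cXt: "insert t X \<in> con T" using claim[of "card (X - u0)"] cX by blast
  have cfgX: "config T (insert t X)" using config_insert_down[OF cX cXt tev] pastX by blast
  have sides: "side j (insert (i,t) x) = (if j = i then insert t (side j x) else side j x)" for j
    by auto
  show ?thesis unfolding cfgG_def
  proof (intro conjI allI impI)
    show "insert (i, t) x \<subseteq> ev (dual_par T)" using cfgG_ev[OF x] i tev by auto
    show "config T (side 1 (insert (i, t) x))"
      using sides[of 1] cfgX cfgG_side[OF x, of 1] unfolding X_def by (cases "i = 1") simp_all
    show "config T (side 2 (insert (i, t) x))"
      using sides[of 2] cfgX cfgG_side[OF x, of 2] unfolding X_def by (cases "i = 2") simp_all
    fix j s assume hs: "(j, s) \<in> insert (i, t) x \<and> pol (dual_par T) (j, s)"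
    show "(3 - j, s) \<in> insert (i, t) x"
    proof (cases "(j,s) = (i,t)")
      case True then show ?thesis using m by simp
    next
      case False
      then have js: "(j,s) \<in> x" using hs by blast
      have "(3 - j, s) \<in> x" using cfgG_cc[OF x js] hs by blast
      then show ?thesis by blast
    qed
  qed
qed

end



context ccs begin

lemma one_step_open:
  assumes x: "cfgG b T x" and i: "i = 1 \<or> i = 2"
    and Y: "config A (insert a (l ` side i x))" and an: "a \<notin> l ` side i x"
    and nb: "b \<Longrightarrow> \<not> pol (dual_par A) (i,a)"
  shows "\<exists>t. cfgG b T (insert (i,t) x) \<and> l t = a \<and> (i,t) \<notin> x"
proof -
  define X where "X = side i x"
  have cX: "config T X" unfolding X_def using cfgG_side[OF x i] .
  have lift: "\<forall>x y. config T x \<and> config A y \<and> l ` x \<subseteq> y \<longrightarrow> (\<exists>z. config T z \<and> x \<subseteq> z \<and> l ` z = y)"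
    using lopen unfolding open_map_def by blast
  have sub: "l ` X \<subseteq> insert a (l ` X)" by blast
  have Y': "config A (insert a (l ` X))" using Y unfolding X_def .
  obtain z where z: "config T z" "X \<subseteq> z" "l ` z = insert a (l ` X)"
    using lift[rule_format, OF conjI[OF cX conjI[OF Y' sub]]] by blast
  have "a \<in> l ` z" using z(3) by blast
  then obtain t where t: "t \<in> z" "l t = a" by blast
  have tX: "t \<notin> X" using an t unfolding X_def by blast
  have injz: "inj_on l z" using esmap_inj[OF lmap z(1)] .
  have zeq: "z = insert t X"
  proof
    show "z \<subseteq> insert t X"
    proof
      fix s assume s: "s \<in> z"
      then have "l s \<in> insert a (l ` X)" using z(3) by blast
      then show "s \<in> insert t X"
      proof
        assume "l s = a"
        then have "s = t" using injz s t unfolding inj_on_def by blast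
        then show ?thesis by simp
      next
        assume "l s \<in> l ` X"
        then obtain s' where s': "s' \<in> X" "l s = l s'" by blast
        then have "s = s'" using injz s z(2) unfolding inj_on_def by blast
        then show ?thesis using s' by simp
      qed
    qed
    show "insert t X \<subseteq> z" using z(2) t(1) by blast
  qed
  have tev: "t \<in> ev T" using config_ev[OF T z(1)] t(1) by blast
  have cfgX: "config T (insert t X)" using z(1) zeq by simp
  have sides: "side j (insert (i,t) x) = (if j = i then insert t (side j x) else side j x)" for j
    by auto
  have "cfgG b T (insert (i,t) x)" unfolding cfgG_def
  proof (intro conjI allI impI)
    show "insert (i, t) x \<subseteq> ev (dual_par T)" using cfgG_ev[OF x] i tev by auto
    show "config T (side 1 (insert (i, t) x))"
      using sides[of 1] cfgX cfgG_side[OF x, of 1] unfolding X_def by (cases "i = 1") simp_all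
    show "config T (side 2 (insert (i, t) x))"
      using sides[of 2] cfgX cfgG_side[OF x, of 2] unfolding X_def by (cases "i = 2") simp_all
    fix j s assume b: "b" and hs: "(j, s) \<in> insert (i, t) x \<and> pol (dual_par T) (j, s)"
    have xx: "cfgG True T x" using x b by simp
    show "(3 - j, s) \<in> insert (i, t) x"
    proof (cases "(j,s) = (i,t)")
      case True
      then have "pol (dual_par A) (i, a)" using hs pol_lr[OF tev, of i] t(2) by simp
      then show ?thesis using nb[OF b] by simp
    next
      case False
      then have js: "(j,s) \<in> x" using hs by blast
      have "(3 - j, s) \<in> x" using cfgG_cc[OF xx js] hs by blast
      then show ?thesis by blast
    qed
  qed
  moreover have "(i,t) \<notin> x" using tX unfolding X_def by simp
  ultimately show ?thesis using t(2) by blast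
qed

lemma rk_less_below:
  assumes "leq A a' a" "a' \<noteq> a"
  shows "rk A (i,a') < rk A (i,a)"
proof -
  have "card {c. leq A c a'} < card {c. leq A c a}" using card_dc_less[OF A assms] .
  then show ?thesis unfolding rk_def by simp
qed

lemma rk_less_cc:
  assumes "i = 1 \<or> i = 2" "pol (dual_par A) (i,a)"
  shows "rk A (3 - i, a) < rk A (i,a)"
proof -
  have "\<not> pol (dual_par A) (3 - i, a)" using pol_dual_swap[OF assms(1), of A a] assms(2) by simp
  then show ?thesis unfolding rk_def using assms(2) by simp
qed

lemma ext_l:
  "\<forall>x. cfgG b T x \<longrightarrow> cfgG b A y \<longrightarrow> cc_map l ` x \<subseteq> y \<longrightarrow> card (y - cc_map l ` x) = k \<longrightarrow>
     (\<exists>z. cfgG b T z \<and> x \<subseteq> z \<and> cc_map l ` z = y)"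
proof (induction k)
  case 0
  show ?case
  proof (intro allI impI)
    fix x assume h: "cfgG b T x" "cfgG b A y" "cc_map l ` x \<subseteq> y" "card (y - cc_map l ` x) = 0"
    have "finite y" using cfgG_fin[OF A h(2)] .
    then have "y - cc_map l ` x = {}" using h(4) by simp
    then have "cc_map l ` x = y" using h(3) by blast
    then show "\<exists>z. cfgG b T z \<and> x \<subseteq> z \<and> cc_map l ` z = y" using h(1) by blast
  qed
next
  case (Suc k)
  show ?case
  proof (intro allI impI)
    fix x assume h: "cfgG b T x" "cfgG b A y" "cc_map l ` x \<subseteq> y" "card (y - cc_map l ` x) = Suc k"
    define I where "I = cc_map l ` x"
    have cI: "cfgG b A I" unfolding I_def using gen_cfg_map[OF lmap lpol h(1)] by blast
    have fy: "finite (y - I)" using cfgG_fin[OF A h(2)] by simp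
    have ne: "y - I \<noteq> {}"
    proof
      assume a: "y - I = {}"
      show False using h(4) unfolding I_def[symmetric] a by simp
    qed
    obtain e where e: "e \<in> y - I" and emin: "\<And>e'. e' \<in> y - I \<Longrightarrow> rk A e \<le> rk A e'"
      using ex_min_fin[OF fy ne, of "rk A"] by blast
    obtain i a where ia: "e = (i,a)" by (cases e)
    have i: "i = 1 \<or> i = 2" and aev: "a \<in> ev A" using cfgG_ev[OF h(2)] e ia by auto
    have inI: "e' \<in> I" if "e' \<in> y" "rk A e' < rk A e" for e'
      using emin[of e'] that by fastforce
    have sI: "side i I = l ` side i x" unfolding I_def using side_image .
    have "I \<subseteq> y" using h(3) unfolding I_def .
    then have "side i I \<subseteq> side i y" unfolding side_def by blast
    then have Ysub: "insert a (side i I) \<subseteq> side i y" using e ia by simp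
    have cY: "config A (insert a (l ` side i x))"
    proof (rule configI)
      show "insert a (l ` side i x) \<in> con A"
        using es_sub[OF A config_con[OF cfgG_side[OF h(2) i]] Ysub] sI by simp
      fix a' c assume hc: "c \<in> insert a (l ` side i x)" "leq A a' c"
      show "a' \<in> insert a (l ` side i x)"
      proof (cases "c = a")
        case True
        show ?thesis
        proof (cases "a' = a")
          case True then show ?thesis by simp
        next
          case False
          have "a' \<in> side i y" using config_down[OF cfgG_side[OF h(2) i], of a a'] hc(2) True e ia by auto
          moreover have "rk A (i,a') < rk A e" using rk_less_below[OF _ False] hc(2) True ia by simp
          ultimately have "(i,a') \<in> I" using inI by simp
          then show ?thesis using sI by auto
        qed
      next
        case False
        then have "c \<in> side i I" using hc(1) sI by simp
        then have "a' \<in> side i I" using config_down[OF cfgG_side[OF cI i] _ hc(2)] by blast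
        then show ?thesis using sI by simp
      qed
    qed
    have anI: "a \<notin> l ` side i x" using e ia sI by auto
    obtain t where t: "cfgG b T (insert (i,t) x)" "l t = a" "(i,t) \<notin> x"
    proof (cases "b \<and> pol (dual_par A) (i,a)")
      case True
      have "(3 - i, a) \<in> y" using cfgG_cc[of A y i a] h(2) True e ia by auto
      moreover have "rk A (3 - i, a) < rk A e" using rk_less_cc[OF i] True ia by simp
      ultimately have "(3 - i, a) \<in> I" using inI by blast
      then obtain t where t: "(3 - i, t) \<in> x" "l t = a" unfolding I_def by auto
      have tev: "t \<in> ev T" using cfgG_ev[OF h(1)] t(1) by auto
      have pt: "pol (dual_par T) (i,t)" using True pol_lr[OF tev, of i] t(2) by simp
      have nt: "(i,t) \<notin> x" using anI t(2) by force
      have xx: "cfgG True T x" using h(1) True by simp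
      have "cfgG True T (insert (i,t) x)" using one_step_pos[OF xx i tev pt t(1) nt] cY t(2) by simp
      then have "cfgG b T (insert (i,t) x)" using True by simp
      then show thesis using that t(2) nt by blast
    next
      case False
      have "\<exists>t. cfgG b T (insert (i,t) x) \<and> l t = a \<and> (i,t) \<notin> x"
        using one_step_open[OF h(1) i cY anI] False by blast
      then show thesis using that by blast
    qed
    have img: "cc_map l ` insert (i,t) x = insert e I" unfolding I_def using ia t(2) by simp
    have "insert e I \<subseteq> y" using e h(3) unfolding I_def by blast
    moreover have "card (y - insert e I) = k"
    proof -
      have "y - insert e I = (y - I) - {e}" by blast
      then show ?thesis using h(4) e fy unfolding I_def[symmetric] by simp
    qed
    ultimately obtain z where z: "cfgG b T z" "insert (i,t) x \<subseteq> z" "cc_map l ` z = y"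
      using Suc.IH t(1) h(2) img by metis
    then show "\<exists>z. cfgG b T z \<and> x \<subseteq> z \<and> cc_map l ` z = y" by blast
  qed
qed

lemma ext_l':
  assumes "cfgG b T x" "cfgG b A y" "cc_map l ` x \<subseteq> y"
  shows "\<exists>z. cfgG b T z \<and> x \<subseteq> z \<and> cc_map l ` z = y"
  using ext_l[where k = "card (y - cc_map l ` x)" and b = b and y = y] assms by blast

lemma SG_ext:
  assumes th: "\<theta> \<in> SG b" and y: "cfgG b A y" and sub: "fst ` \<theta> \<subseteq> y"
  shows "\<exists>\<theta>'\<in>SG b. \<theta> \<subseteq> \<theta>' \<and> fst ` \<theta>' = y"
proof -
  obtain x where x: "cfgG b T x" "\<theta> = imgC l r x" using th SG_iff by blast
  obtain z where z: "cfgG b T z" "x \<subseteq> z" "cc_map l ` z = y"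
    using ext_l'[OF x(1) y] sub x(2) fst_imgC by metis
  have "imgC l r z \<in> SG b" using SG_iff z(1) by blast
  moreover have "\<theta> \<subseteq> imgC l r z" using x(2) z(2) unfolding imgC_def by blast
  moreover have "fst ` imgC l r z = y" using z(3) fst_imgC by simp
  ultimately show ?thesis by blast
qed

lemma ext_r':
  assumes x: "cfgG b T x" and y: "cfgG b A y" and sub: "cc_map r ` x \<subseteq> y"
  shows "\<exists>z. cfgG b T z \<and> x \<subseteq> z \<and> cc_map r ` z = y"
proof -
  have th: "imgC l r x \<in> SG b" using SG_iff x by blast
  have thi: "(imgC l r x)\<inverse> \<in> SG b" using SG_inv[OF th] .
  have "fst ` (imgC l r x)\<inverse> = cc_map r ` x" using snd_imgC[of x] by force
  then have "fst ` (imgC l r x)\<inverse> \<subseteq> y" using sub by simp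
  then obtain \<theta>' where t': "\<theta>' \<in> SG b" "(imgC l r x)\<inverse> \<subseteq> \<theta>'" "fst ` \<theta>' = y"
    using SG_ext[OF thi y] by blast
  have "\<theta>'\<inverse> \<in> SG b" using SG_inv[OF t'(1)] .
  then obtain z where z: "cfgG b T z" "\<theta>'\<inverse> = imgC l r z" using SG_iff by blast
  have "imgC l r x \<subseteq> \<theta>'\<inverse>"
  proof
    fix p assume "p \<in> imgC l r x"
    then have "prod.swap p \<in> (imgC l r x)\<inverse>" by (cases p) simp
    then have "prod.swap p \<in> \<theta>'" by (rule subsetD[OF t'(2)])
    then show "p \<in> \<theta>'\<inverse>" by (cases p) simp
  qed
  then have "imgC l r x \<subseteq> imgC l r z" using z(2) by simp
  then have xz: "x \<subseteq> z" using imgC_mono[OF _ cfgG_ev[OF x] cfgG_ev[OF z(1)]] by blast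
  have "snd ` (\<theta>'\<inverse>) = fst ` \<theta>'" by force
  then have rz: "cc_map r ` z = y" using snd_imgC[of z] z(2) t'(3) by simp
  show ?thesis by (rule exI[of _ z]) (use z(1) xz rz in simp)
qed

lemma iso_SG:
  assumes cfgE: "\<And>y. config E y \<longleftrightarrow> cfgG b A y"
  shows "iso_family E (SG b)"
proof (rule iso_familyI)
  show "\<forall>\<theta>\<in>SG b. config E (fst ` \<theta>) \<and> config E (snd ` \<theta>) \<and> bij_rel \<theta>"
  proof
    fix \<theta> assume "\<theta> \<in> SG b"
    then obtain x where x: "cfgG b T x" "\<theta> = imgC l r x" using SG_iff by blast
    show "config E (fst ` \<theta>) \<and> config E (snd ` \<theta>) \<and> bij_rel \<theta>"
      unfolding cfgE x(2) using SG_props1[OF x(1)] .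
  qed
  show "\<forall>x. config E x \<longrightarrow> Id_on x \<in> SG b"
  proof (intro allI impI)
    fix y assume "config E y"
    then show "Id_on y \<in> SG b" using SG_id[of b y] cfgE[of y] by simp
  qed
  show "\<forall>\<theta>\<in>SG b. \<theta>\<inverse> \<in> SG b"
  proof
    fix \<theta> assume "\<theta> \<in> SG b" then show "\<theta>\<inverse> \<in> SG b" by (rule SG_inv)
  qed
  show "\<forall>\<theta> \<phi>. \<theta> \<in> SG b \<and> \<phi> \<in> SG b \<and> snd ` \<theta> = fst ` \<phi> \<longrightarrow> \<theta> O \<phi> \<in> SG b"
  proof (intro allI impI)
    fix \<theta> \<phi> assume h: "\<theta> \<in> SG b \<and> \<phi> \<in> SG b \<and> snd ` \<theta> = fst ` \<phi>"
    show "\<theta> O \<phi> \<in> SG b" using SG_comp[of \<theta> b \<phi>] h by simp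
  qed
  show "\<forall>\<theta> x. \<theta> \<in> SG b \<and> config E x \<and> x \<subseteq> fst ` \<theta> \<longrightarrow> {p \<in> \<theta>. fst p \<in> x} \<in> SG b"
  proof (intro allI impI)
    fix \<theta> y assume h: "\<theta> \<in> SG b \<and> config E y \<and> y \<subseteq> fst ` \<theta>"
    then have "cfgG b A y" using cfgE[of y] by simp
    then show "{p \<in> \<theta>. fst p \<in> y} \<in> SG b" using SG_restr[of \<theta> b y] h by simp
  qed
  show "\<forall>\<theta> y. \<theta> \<in> SG b \<and> config E y \<and> fst ` \<theta> \<subseteq> y \<longrightarrow> (\<exists>\<theta>'\<in>SG b. \<theta> \<subseteq> \<theta>' \<and> fst ` \<theta>' = y)"
  proof (intro allI impI)
    fix \<theta> y assume h: "\<theta> \<in> SG b \<and> config E y \<and> fst ` \<theta> \<subseteq> y"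
    then have "cfgG b A y" using cfgE[of y] by simp
    then show "\<exists>\<theta>'\<in>SG b. \<theta> \<subseteq> \<theta>' \<and> fst ` \<theta>' = y" using SG_ext[of \<theta> b y] h by simp
  qed
qed

end



lemma rk_less_below_gen:
  assumes "is_es E" "leq E a' a" "a' \<noteq> a"
  shows "rk E (i,a') < rk E (i,a)"
proof -
  have "card {c. leq E c a'} < card {c. leq E c a}" using card_dc_less[OF assms] .
  then show ?thesis unfolding rk_def by simp
qed

lemma rk_less_cc_gen:
  assumes "i = 1 \<or> i = 2" "pol (dual_par E) (i,a)"
  shows "rk E (3 - i, a) < rk E (i,a)"
proof -
  have "\<not> pol (dual_par E) (3 - i, a)" using pol_dual_swap[OF assms(1), of E a] assms(2) by simp
  then show ?thesis unfolding rk_def using assms(2) by simp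
qed

lemma cfgG_True_False: "cfgG True E x \<Longrightarrow> cfgG False E x" unfolding cfgG_def by simp

lemma rigid_dual: assumes "rigid T A f" shows "rigid (dual_par T) (dual_par A) (cc_map f)"
  unfolding rigid_def
proof (intro allI impI)
  fix p q assume h: "leq (dual_par T) p q"
  obtain i a j b where pq: "p = (i,a)" "q = (j,b)" by (cases p, cases q)
  have "i = j" "i = 1 \<or> i = 2" "leq T a b" using h unfolding pq leq_dual by blast+
  moreover have "leq A (f a) (f b)" using assms calculation(3) unfolding rigid_def by blast
  ultimately show "leq (dual_par A) (cc_map f p) (cc_map f q)" using pq by simp
qed

lemma cc_step_map:
  assumes f: "rigid T A f" and fe: "\<And>t. t \<in> ev T \<Longrightarrow> f t \<in> ev A"
    and fp: "\<And>t. t \<in> ev T \<Longrightarrow> pol A (f t) = pol T t"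
    and s: "cc_step T p q"
  shows "cc_step A (cc_map f p) (cc_map f q)"
  using s
proof (cases rule: cc_step_cases)
  case (1 i a b)
  have "leq A (f a) (f b)" using f 1(4) unfolding rigid_def by blast
  then show ?thesis using cc_step_leq[OF 1(3)] 1 by simp
next
  case (2 i a)
  have "(i, f a) \<in> ev (dual_par A)" using 2 fe by simp
  moreover have "\<not> pol (dual_par A) (i, f a)" using 2(5) fp[OF 2(4)] by (cases "i = 1") simp_all
  ultimately show ?thesis unfolding cc_step_def using 2 by simp
qed

lemma rigid_CC:
  assumes T: "is_es T" and f: "rigid T A f" and fe: "\<And>t. t \<in> ev T \<Longrightarrow> f t \<in> ev A"
    and fp: "\<And>t. t \<in> ev T \<Longrightarrow> pol A (f t) = pol T t"
  shows "rigid (CC T) (CC A) (cc_map f)"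
  unfolding rigid_def
proof (intro allI impI)
  fix p q assume "leq (CC T) p q"
  then have h: "CC_leq T p q" by simp
  have pe: "p \<in> ev (dual_par T)" "q \<in> ev (dual_par T)" using CC_leq_ev[OF h] by simp_all
  have r: "(cc_step T)\<^sup>*\<^sup>* p q" using h unfolding CC_leq_def by simp
  have "(cc_step A)\<^sup>*\<^sup>* (cc_map f p) (cc_map f q)"
    using r
  proof (induction rule: rtranclp_induct)
    case base then show ?case by simp
  next
    case (step q r)
    then show ?case using cc_step_map[OF f fe fp step(2)] by simp
  qed
  moreover have "cc_map f p \<in> ev (dual_par A)" "cc_map f q \<in> ev (dual_par A)"
    using pe fe by (cases p, auto, cases q, auto)
  ultimately show "leq (CC A) (cc_map f p) (cc_map f q)" unfolding CC_leq_eq CC_leq_def by simp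
qed

lemma rt_first:
  assumes "r\<^sup>*\<^sup>* p q" "p \<noteq> q"
  shows "\<exists>c. r p c \<and> c \<noteq> p \<and> r\<^sup>*\<^sup>* c q"
  using assms
proof (induction rule: converse_rtranclp_induct)
  case base then show ?case by simp
next
  case (step p p')
  show ?case
  proof (cases "p' = p")
    case True
    then show ?thesis using step by simp
  next
    case False
    then show ?thesis using step by blast
  qed
qed

lemma courteous_CC: assumes A: "is_es A" shows "courteous (CC A) (dual_par A) (\<lambda>p. p)"
  unfolding courteous_def
proof (intro allI impI)
  fix s1 s2 assume h: "imm (CC A) s1 s2 \<and> (pol (CC A) s1 \<or> \<not> pol (CC A) s2)"
  have l12: "CC_leq A s1 s2" "s1 \<noteq> s2" using h unfolding imm_def lt_def CC_leq_eq by blast+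
  have nob: "\<not> (CC_leq A s1 c \<and> s1 \<noteq> c \<and> CC_leq A c s2 \<and> c \<noteq> s2)" for c
    using h unfolding imm_def lt_def CC_leq_eq by blast
  have e1: "s1 \<in> ev (dual_par A)" using CC_leq_ev[OF l12(1)] by simp
  have e2: "s2 \<in> ev (dual_par A)" using CC_leq_ev[OF l12(1)] by simp
  have "(cc_step A)\<^sup>*\<^sup>* s1 s2" using l12(1) unfolding CC_leq_def by simp
  then obtain c where c: "cc_step A s1 c" "c \<noteq> s1" "(cc_step A)\<^sup>*\<^sup>* c s2" using rt_first l12(2) by metis
  have cev: "c \<in> ev (dual_par A)" using cc_rt_snd[OF A r_into_rtranclp[of "cc_step A", OF c(1)] e1] by simp
  have "CC_leq A s1 c" using c(1) e1 cev unfolding CC_leq_def by simp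
  moreover have "CC_leq A c s2" using c(3) cev e2 unfolding CC_leq_def by simp
  ultimately have "c = s2" using nob[of c] c(2) by blast
  then have st: "cc_step A s1 s2" using c(1) by simp
  have EA: "is_es (dual_par A)" using is_es_dual[OF A] .
  have dl: "CC_leq A a b" if "leq (dual_par A) a b" for a b
  proof -
    have "a \<in> ev (dual_par A)" "b \<in> ev (dual_par A)" using es_leq_ev[OF EA that] by simp_all
    then show ?thesis using that unfolding CC_leq_def cc_step_def by auto
  qed
  have ld: "leq (dual_par A) s1 s2"
  proof (cases "leq (dual_par A) s1 s2")
    case True then show ?thesis .
  next
    case False
    then have cc: "s1 \<in> ev (dual_par A) \<and> \<not> pol (dual_par A) s1 \<and> s2 = (3 - fst s1, snd s1)"
      using st unfolding cc_step_def by blast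
    obtain i a where ia: "s1 = (i,a)" by (cases s1)
    have i: "i = 1 \<or> i = 2" using e1 ia by simp
    have "pol (dual_par A) s2" using cc ia pol_dual_swap[OF i, of A a] by simp
    then show ?thesis using h cc by simp
  qed
  have "\<not> (\<exists>c. lt (dual_par A) s1 c \<and> lt (dual_par A) c s2)"
  proof
    assume "\<exists>c. lt (dual_par A) s1 c \<and> lt (dual_par A) c s2"
    then obtain c where "leq (dual_par A) s1 c" "s1 \<noteq> c" "leq (dual_par A) c s2" "c \<noteq> s2"
      unfolding lt_def by blast
    then show False using nob[of c] dl by blast
  qed
  then show "imm (dual_par A) s1 s2" unfolding imm_def lt_def using ld l12(2) by simp
qed

context ccs begin

lemma pair_inj: "e \<in> ev (dual_par T) \<Longrightarrow> e' \<in> ev (dual_par T) \<Longrightarrow>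
   cc_map l e = cc_map l e' \<Longrightarrow> cc_map r e = cc_map r e' \<Longrightarrow> e = e'"
  using mono_eq by (cases e, cases e', auto)

lemma strong_rec: "strong_receptive (dual_par A) (SG True) (SG False) (\<lambda>p. p)"
  unfolding strong_receptive_def
proof (intro allI impI)
  fix \<theta> a1 a2
  assume h: "\<theta> \<in> SG True \<and> a1 \<notin> fst ` image_rel (\<lambda>p. p) \<theta> \<and>
       insert (a1, a2) (image_rel (\<lambda>p. p) \<theta>) \<in> SG False \<and> \<not> pol (dual_par A) a1 \<and> \<not> pol (dual_par A) a2"
  have ir: "image_rel (\<lambda>p. p) \<theta> = \<theta>" unfolding image_rel_def by force
  obtain x where x: "cfgG True T x" "\<theta> = imgC l r x" using h SG_iff by blast
  obtain u where u: "cfgG False T u" "insert (a1,a2) \<theta> = imgC l r u" using h ir SG_iff by metis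
  have X: "x \<subseteq> ev (dual_par T)" using cfgG_ev[OF x(1)] .
  have U: "u \<subseteq> ev (dual_par T)" using cfgG_ev[OF u(1)] .
  have a1n: "a1 \<notin> fst ` \<theta>" using h ir by simp
  have "imgC l r x \<subseteq> imgC l r u" using u(2) x(2) by blast
  then have xu: "x \<subseteq> u" using imgC_mono[OF _ X U] by blast
  have "(a1,a2) \<in> imgC l r u" using u(2) by blast
  then obtain e where e: "e \<in> u" "(a1,a2) = (cc_map l e, cc_map r e)" unfolding imgC_def by blast
  have uins: "u \<subseteq> insert e x"
  proof
    fix e' assume e': "e' \<in> u"
    have "(cc_map l e', cc_map r e') \<in> insert (a1,a2) \<theta>" using u(2) e' unfolding imgC_def by blast
    then show "e' \<in> insert e x"
    proof
      assume "(cc_map l e', cc_map r e') = (a1,a2)"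
      then have "e' = e" using pair_inj[of e' e] e e' U by auto
      then show ?thesis by simp
    next
      assume "(cc_map l e', cc_map r e') \<in> \<theta>"
      then obtain e'' where "e'' \<in> x" "(cc_map l e', cc_map r e') = (cc_map l e'', cc_map r e'')"
        using x(2) unfolding imgC_def by blast
      then have "e' = e''" using pair_inj[of e' e''] e' U X by auto
      then show ?thesis using \<open>e'' \<in> x\<close> by simp
    qed
  qed
  obtain i t where it: "e = (i,t)" by (cases e)
  have tev: "t \<in> ev T" using U e(1) it by auto
  have np: "\<not> pol (dual_par T) (i,t)" using h e(2) it pol_lr[OF tev, of i] by simp
  have "cfgG True T u" unfolding cfgG_def
  proof (intro conjI allI impI)
    show "u \<subseteq> ev (dual_par T)" using U .
    show "config T (side 1 u)" using cfgG_side[OF u(1)] by simp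
    show "config T (side 2 u)" using cfgG_side[OF u(1)] by simp
    fix j s assume hs: "(j, s) \<in> u \<and> pol (dual_par T) (j, s)"
    have "(j,s) \<noteq> e" using hs np it by auto
    then have "(j,s) \<in> x" using hs uins by blast
    then have "(3 - j, s) \<in> x" using cfgG_cc[OF x(1)] hs by blast
    then show "(3 - j, s) \<in> u" using xu by blast
  qed
  then have ins: "insert (a1,a2) \<theta> \<in> SG True" using u(2) SG_iff by metis
  show "\<exists>!p. fst p \<notin> fst ` \<theta> \<and> insert p \<theta> \<in> SG True \<and> fst p = a1 \<and> snd p = a2"
  proof (rule ex1I[of _ "(a1,a2)"])
    show "fst (a1, a2) \<notin> fst ` \<theta> \<and> insert (a1, a2) \<theta> \<in> SG True \<and> fst (a1, a2) = a1 \<and> snd (a1, a2) = a2"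
      using a1n ins by simp
    fix p assume "fst p \<notin> fst ` \<theta> \<and> insert p \<theta> \<in> SG True \<and> fst p = a1 \<and> snd p = a2"
    then show "p = (a1,a2)" by (cases p) simp
  qed
qed

end



context ccs begin

lemma thin_SG: "thin_wrt (pol (dual_par A)) (CC A) (SG True)"
  unfolding thin_wrt_def
proof (intro allI impI)
  fix \<theta> \<theta>1 \<theta>2
  assume h: "\<theta> \<in> SG True \<and> \<theta>1 \<in> SG True \<and> \<theta>2 \<in> SG True \<and>
       ext_pol (pol (dual_par A)) True \<theta> \<theta>1 \<and> ext_pol (pol (dual_par A)) True \<theta> \<theta>2 \<and>
       config (CC A) (fst ` \<theta>1 \<union> fst ` \<theta>2)"
  obtain x where x: "cfgG True T x" "\<theta> = imgC l r x" using h SG_iff by blast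
  obtain z1 where z1: "cfgG True T z1" "\<theta>1 = imgC l r z1" using h SG_iff by blast
  obtain z2 where z2: "cfgG True T z2" "\<theta>2 = imgC l r z2" using h SG_iff by blast
  have X: "x \<subseteq> ev (dual_par T)" using cfgG_ev[OF x(1)] .
  have Z1: "z1 \<subseteq> ev (dual_par T)" using cfgG_ev[OF z1(1)] .
  have Z2: "z2 \<subseteq> ev (dual_par T)" using cfgG_ev[OF z2(1)] .
  have e1: "\<theta> \<subseteq> \<theta>1" "\<forall>p\<in>\<theta>1 - \<theta>. pol (dual_par A) (fst p)" using h unfolding ext_pol_def by simp_all
  have e2: "\<theta> \<subseteq> \<theta>2" "\<forall>p\<in>\<theta>2 - \<theta>. pol (dual_par A) (fst p)" using h unfolding ext_pol_def by simp_all
  have xz1: "x \<subseteq> z1" using imgC_mono[OF _ X Z1] e1(1) x(2) z1(2) by simp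
  have cA: "cfgG True A (cc_map l ` z1 \<union> cc_map l ` z2)"
    using h config_CC[OF A] fst_imgC z1(2) z2(2) by simp
  have inx: "e \<in> x" if ee: "e \<in> ev (dual_par T)" and em: "(cc_map l e, cc_map r e) \<in> \<theta>" for e
  proof -
    obtain e' where e': "e' \<in> x" "(cc_map l e, cc_map r e) = (cc_map l e', cc_map r e')"
      using em x(2) unfolding imgC_def by blast
    then have "e = e'" using pair_inj[of e e'] ee X by auto
    then show ?thesis using e'(1) by simp
  qed
  have key: "pol (dual_par T) (i,t) \<and> (3 - i, t) \<in> z1" if "(i,t) \<in> z2" "(i,t) \<notin> z1" for i t
  proof -
    have it: "(i = 1 \<or> i = 2) \<and> t \<in> ev T" using Z2 that(1) by auto
    have ev1: "(i,t) \<in> ev (dual_par T)" using it by simp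
    have "(i,t) \<notin> x" using that(2) xz1 by blast
    then have "(cc_map l (i,t), cc_map r (i,t)) \<notin> \<theta>" using inx[OF ev1] by blast
    then have "((i, l t), (i, r t)) \<notin> \<theta>" by simp
    moreover have "((i, l t), (i, r t)) \<in> \<theta>2" using imgC_memI[OF that(1)] z2(2) by simp
    ultimately have pa: "pol (dual_par A) (i, l t)" using e2(2) by force
    then have pt: "pol (dual_par T) (i,t)" using pol_lr it by simp
    have m2: "(3 - i, t) \<in> z2" using cfgG_cc[OF z2(1) that(1) pt] .
    have ev2: "(3 - i, t) \<in> ev (dual_par T)" using it by auto
    have "((3 - i, l t), (3 - i, r t)) \<in> \<theta>"
    proof (rule ccontr)
      assume "((3 - i, l t), (3 - i, r t)) \<notin> \<theta>"
      moreover have "((3 - i, l t), (3 - i, r t)) \<in> \<theta>2" using imgC_memI[OF m2] z2(2) by simp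
      ultimately have "pol (dual_par A) (3 - i, l t)" using e2(2) by force
      then show False using pa pol_dual_swap[of i A "l t"] it by simp
    qed
    then have "(cc_map l (3 - i, t), cc_map r (3 - i, t)) \<in> \<theta>" by simp
    then have "(3 - i, t) \<in> x" using inx[OF ev2] by blast
    then show ?thesis using pt xz1 by blast
  qed
  have claim: "\<forall>w. card w = k \<longrightarrow> cfgG True T w \<longrightarrow> w \<subseteq> z2 \<longrightarrow> cfgG True T (z1 \<union> w)" for k
  proof (induction k)
    case 0
    show ?case
    proof (intro allI impI)
      fix w assume hw: "card w = 0" "cfgG True T w" "w \<subseteq> z2"
      have "finite w" using cfgG_fin[OF T hw(2)] .
      then have "w = {}" using hw(1) by simp
      then show "cfgG True T (z1 \<union> w)" using z1(1) by simp
    qed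
  next
    case (Suc k)
    show ?case
    proof (intro allI impI)
      fix w assume hw: "card w = Suc k" "cfgG True T w" "w \<subseteq> z2"
      have fw: "finite w" using cfgG_fin[OF T hw(2)] .
      have ne: "w \<noteq> {}" using hw(1) by auto
      obtain e where e: "e \<in> w" and emax: "\<And>e'. e' \<in> w \<Longrightarrow> rk T e' \<le> rk T e"
        using ex_max_fin[OF fw ne, of "rk T"] by blast
      obtain i t where it: "e = (i,t)" by (cases e)
      have i: "i = 1 \<or> i = 2" and tev: "t \<in> ev T" using cfgG_ev[OF hw(2)] e it by auto
      define w' where "w' = w - {e}"
      have ww: "w = insert e w'" unfolding w'_def using e by blast
      have cw': "cfgG True T w'" unfolding cfgG_def
      proof (intro conjI allI impI)
        show "w' \<subseteq> ev (dual_par T)" using cfgG_ev[OF hw(2)] unfolding w'_def by blast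
        have cs: "config T (side j w')" if j: "j = 1 \<or> j = 2" for j
        proof (rule configI)
          have "side j w' \<subseteq> side j w" unfolding w'_def by auto
          then show "side j w' \<in> con T" using es_sub[OF T config_con[OF cfgG_side[OF hw(2) j]]] by blast
          fix a c assume hc: "c \<in> side j w'" "leq T a c"
          have cw: "(j,c) \<in> w" "(j,c) \<noteq> e" using hc(1) unfolding w'_def by auto
          have aw: "(j,a) \<in> w" using config_down[OF cfgG_side[OF hw(2) j], of c a] hc(2) cw(1) by simp
          have "(j,a) \<noteq> e"
          proof
            assume ae: "(j,a) = e"
            then have "a \<noteq> c" using cw(2) by auto
            then have "rk T (j,a) < rk T (j,c)" using rk_less_below_gen[OF T hc(2)] by blast
            moreover have "rk T (j,c) \<le> rk T e" using emax cw(1) by blast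
            ultimately show False using ae by simp
          qed
          then show "a \<in> side j w'" using aw unfolding w'_def by simp
        qed
        show "config T (side 1 w')" using cs by simp
        show "config T (side 2 w')" using cs by simp
        fix j s assume hs: "(j, s) \<in> w' \<and> pol (dual_par T) (j, s)"
        have sw: "(j,s) \<in> w" using hs unfolding w'_def by blast
        have j: "j = 1 \<or> j = 2" using cfgG_ev[OF hw(2)] sw by auto
        have m: "(3 - j, s) \<in> w" using cfgG_cc[OF hw(2) sw] hs by blast
        have "(3 - j, s) \<noteq> e"
        proof
          assume me: "(3 - j, s) = e"
          have "pol (dual_par T) (j, s)" using hs by blast
          then have "rk T (3 - j, s) < rk T (j, s)" by (rule rk_less_cc_gen[OF j])
          moreover have "rk T (j,s) \<le> rk T e" using emax sw by blast
          ultimately show False using me by simp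
        qed
        then show "(3 - j, s) \<in> w'" using m unfolding w'_def by blast
      qed
      have "card w' = k" using hw(1) e fw unfolding w'_def by simp
      moreover have "w' \<subseteq> z2" using hw(3) unfolding w'_def by blast
      ultimately have IH: "cfgG True T (z1 \<union> w')" using Suc.IH cw' by blast
      show "cfgG True T (z1 \<union> w)"
      proof (cases "e \<in> z1")
        case True
        then have "z1 \<union> w = z1 \<union> w'" using ww by blast
        then show ?thesis using IH by simp
      next
        case False
        have ez2: "(i,t) \<in> z2" using hw(3) e it by blast
        have kk: "pol (dual_par T) (i,t) \<and> (3 - i, t) \<in> z1" using key[OF ez2] False it by blast
        define V where "V = z1 \<union> w'"
        have cV: "cfgG True T V" unfolding V_def using IH .
        have nV: "(i,t) \<notin> V" unfolding V_def w'_def using False it by blast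
        have mV: "(3 - i, t) \<in> V" unfolding V_def using kk by blast
        have cVi: "config T (side i V)" using cfgG_side[OF cV i] .
        have past: "t' \<in> side i V" if "leq T t' t" "t' \<noteq> t" for t'
        proof -
          have "t \<in> side i w" using e it by simp
          then have "t' \<in> side i w" using config_down[OF cfgG_side[OF hw(2) i]] that(1) by blast
          then show ?thesis unfolding V_def w'_def using that(2) it by auto
        qed
        have cY: "config A (side i (cc_map l ` z1 \<union> cc_map l ` z2))" using cfgG_side[OF cA i] .
        have sub: "insert (l t) (l ` side i V) \<subseteq> side i (cc_map l ` z1 \<union> cc_map l ` z2)"
        proof
          fix a assume "a \<in> insert (l t) (l ` side i V)"
          then show "a \<in> side i (cc_map l ` z1 \<union> cc_map l ` z2)"
          proof
            assume at: "a = l t"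
            have "cc_map l (i,t) \<in> cc_map l ` z2" by (rule imageI[OF ez2])
            then show ?thesis using at by simp
          next
            assume "a \<in> l ` side i V"
            then obtain s where s: "(i,s) \<in> V" "a = l s" by auto
            then have "(i,s) \<in> z1 \<or> (i,s) \<in> z2" unfolding V_def w'_def using hw(3) by blast
            then have "cc_map l (i,s) \<in> cc_map l ` z1 \<or> cc_map l (i,s) \<in> cc_map l ` z2" by blast
            then show ?thesis using s(2) by auto
          qed
        qed
        have Yc: "config A (insert (l t) (l ` side i V))" using image_config[OF cVi tev past cY sub] .
        have "cfgG True T (insert (i,t) V)" using one_step_pos[OF cV i tev _ mV nV Yc] kk by blast
        moreover have "insert (i,t) V = z1 \<union> w" unfolding V_def using ww it by blast
        ultimately show ?thesis by simp
      qed
    qed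
  qed
  have "cfgG True T (z1 \<union> z2)" using claim[of "card z2"] z2(1) by blast
  moreover have "\<theta>1 \<union> \<theta>2 = imgC l r (z1 \<union> z2)" unfolding z1(2) z2(2) imgC_def by blast
  ultimately show "\<theta>1 \<union> \<theta>2 \<in> SG True" using SG_iff by blast
qed

end



context ccs begin

lemma essp_gen:
  assumes cT: "\<And>x. config E' x \<longleftrightarrow> cfgG b T x" and cA: "\<And>y. config E y \<longleftrightarrow> cfgG b A y"
    and evT: "ev E' = ev (dual_par T)" and evA: "ev E = ev (dual_par A)"
    and pT: "pol E' = pol (dual_par T)" and pA: "pol E = pol (dual_par A)"
    and rl: "rigid E' E (cc_map l)" and rr: "rigid E' E (cc_map r)"
    and esE: "is_es E" and esE': "is_es E'"
  shows "is_symmetry E E' (cc_map l) (cc_map r) \<and> essp E E' (cc_map l) (cc_map r) \<and>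
         sym_fam E' (cc_map l) (cc_map r) = SG b"
proof -
  have sf: "sym_fam E' (cc_map l) (cc_map r) = SG b"
    unfolding sym_fam_def SG_def imgC_def using cT by simp
  have evm: "cc_map f a \<in> ev E" if "a \<in> ev E'" and fm: "es_map T A f" for a f
  proof -
    obtain i t where it: "a = (i,t)" by (cases a)
    then have "(i = 1 \<or> i = 2) \<and> t \<in> ev T" using that(1) evT by simp
    then show ?thesis using it evA esmap_ev[OF fm] by simp
  qed
  have esm: "es_map E' E (cc_map f)" if fm: "es_map T A f" and fp: "\<And>t. t \<in> ev T \<Longrightarrow> pol A (f t) = pol T t" for f
    unfolding es_map_def
  proof (intro conjI)
    show "\<forall>a\<in>ev E'. cc_map f a \<in> ev E" using evm fm by blast
    show "\<forall>x. config E' x \<longrightarrow> config E (cc_map f ` x) \<and> inj_on (cc_map f) x"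
    proof (intro allI impI)
    fix x assume "config E' x"
    then have "cfgG b T x" using cT by simp
    then have "cfgG b A (cc_map f ` x) \<and> inj_on (cc_map f) x" using gen_cfg_map[OF fm fp] by blast
    then show "config E (cc_map f ` x) \<and> inj_on (cc_map f) x" using cA by simp
    qed
  qed
  have ol: "open_map E' E (cc_map l)" unfolding open_map_def
  proof (intro conjI allI impI)
    show "es_map E' E (cc_map l)" using esm[OF lmap lpol] .
    show "rigid E' E (cc_map l)" by fact
    fix x y assume h: "config E' x \<and> config E y \<and> cc_map l ` x \<subseteq> y"
    then have "cfgG b T x" "cfgG b A y" "cc_map l ` x \<subseteq> y" using cT cA by simp_all
    then have "\<exists>z. cfgG b T z \<and> x \<subseteq> z \<and> cc_map l ` z = y" by (rule ext_l')
    then obtain z where "cfgG b T z" "x \<subseteq> z" "cc_map l ` z = y" by blast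
    then show "\<exists>z. config E' z \<and> x \<subseteq> z \<and> cc_map l ` z = y" using cT by (intro exI[of _ z]) simp
  qed
  have or: "open_map E' E (cc_map r)" unfolding open_map_def
  proof (intro conjI allI impI)
    show "es_map E' E (cc_map r)" using esm[OF rmap rpol] .
    show "rigid E' E (cc_map r)" by fact
    fix x y assume h: "config E' x \<and> config E y \<and> cc_map r ` x \<subseteq> y"
    then have "cfgG b T x" "cfgG b A y" "cc_map r ` x \<subseteq> y" using cT cA by simp_all
    then have "\<exists>z. cfgG b T z \<and> x \<subseteq> z \<and> cc_map r ` z = y" by (rule ext_r')
    then obtain z where "cfgG b T z" "x \<subseteq> z" "cc_map r ` z = y" by blast
    then show "\<exists>z. config E' z \<and> x \<subseteq> z \<and> cc_map r ` z = y" using cT by (intro exI[of _ z]) simp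
  qed
  have inj: "inj_on (\<lambda>e. (cc_map l e, cc_map r e)) (ev E')"
  proof (rule inj_onI)
    fix e e' assume "e \<in> ev E'" "e' \<in> ev E'" "(cc_map l e, cc_map r e) = (cc_map l e', cc_map r e')"
    then show "e = e'" using pair_inj[of e e'] evT by simp
  qed
  have iso': "iso_family E (sym_fam E' (cc_map l) (cc_map r))" using iso_SG[of E b] cA sf by simp
  have sym: "is_symmetry E E' (cc_map l) (cc_map r)"
    unfolding is_symmetry_def using esE' ol or inj iso' by blast
  have epl: "esp_map E' E (cc_map l)" unfolding esp_map_def
  proof
    show "es_map E' E (cc_map l)" using esm[OF lmap lpol] .
    show "\<forall>a\<in>ev E'. pol E (cc_map l a) = pol E' a"
    proof
      fix a assume "a \<in> ev E'"
      then obtain i t where it: "a = (i,t)" "t \<in> ev T" using evT by (cases a) auto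
      show "pol E (cc_map l a) = pol E' a" using pA pT it pol_lr[OF it(2)] by simp
    qed
  qed
  have epr: "esp_map E' E (cc_map r)" unfolding esp_map_def
  proof
    show "es_map E' E (cc_map r)" using esm[OF rmap rpol] .
    show "\<forall>a\<in>ev E'. pol E (cc_map r a) = pol E' a"
    proof
      fix a assume "a \<in> ev E'"
      then obtain i t where it: "a = (i,t)" "t \<in> ev T" using evT by (cases a) auto
      show "pol E (cc_map r a) = pol E' a" using pA pT it pol_rr[OF it(2)] by simp
    qed
  qed
  have "essp E E' (cc_map l) (cc_map r)" unfolding essp_def using esE sym epl epr by blast
  then show ?thesis using sym sf by blast
qed

end

lemma ccs_of_tcg:
  assumes "tcg A T l r Sm Sp"
  shows "ccs A T l r"
proof -
  have ess: "essp A T l r" and race: "race_preserving A T l" using assms unfolding tcg_def by blast+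
  have A: "is_es A" and sym: "is_symmetry A T l r" and el: "esp_map T A l" and er: "esp_map T A r"
    using ess unfolding essp_def by blast+
  have T: "is_es T" and ol: "open_map T A l" and or: "open_map T A r"
    and mono: "inj_on (\<lambda>e. (l e, r e)) (ev T)" and iso: "iso_family A (sym_fam T l r)"
    using sym unfolding is_symmetry_def by blast+
  have lm: "es_map T A l" "rigid T A l" using ol unfolding open_map_def by blast+
  have rm: "es_map T A r" "rigid T A r" using or unfolding open_map_def by blast+
  have lp: "\<And>t. t \<in> ev T \<Longrightarrow> pol A (l t) = pol T t" using el unfolding esp_map_def by blast
  have rp: "\<And>t. t \<in> ev T \<Longrightarrow> pol A (r t) = pol T t" using er unfolding esp_map_def by blast
  show ?thesis by (rule ccs.intro[OF A T lm(1) rm(1) lm(2) rm(2) lp rp mono iso ol race])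
qed

theorem mainTheorem2:
  fixes A :: "'a esp" and T :: "'t esp" and l r :: "'t \<Rightarrow> 'a"
    and Sm Sp :: "('a \<times> 'a) set set"
  assumes "tcg A T l r Sm Sp"
  shows "is_symmetry (CC A) (CC T) (cc_map l) (cc_map r) \<and>
         essp (CC A) (CC T) (cc_map l) (cc_map r) \<and>
         sim_strategy (CC A) (CC T) (cc_map l) (cc_map r)
                      (dual_par A) (dual_par T) (cc_map l) (cc_map r) (\<lambda>p. p)"
proof -
  interpret ccs A T l r using ccs_of_tcg[OF assms] .
  have fe: "\<And>t. t \<in> ev T \<Longrightarrow> l t \<in> ev A" "\<And>t. t \<in> ev T \<Longrightarrow> r t \<in> ev A"
    using esmap_ev[OF lmap] esmap_ev[OF rmap] by blast+
  have G1: "is_symmetry (CC A) (CC T) (cc_map l) (cc_map r) \<and> essp (CC A) (CC T) (cc_map l) (cc_map r) \<and>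
         sym_fam (CC T) (cc_map l) (cc_map r) = SG True"
  proof (rule essp_gen)
    show "\<And>x. config (CC T) x = cfgG True T x" using config_CC[OF T] by blast
    show "\<And>y. config (CC A) y = cfgG True A y" using config_CC[OF A] by blast
    show "ev (CC T) = ev (dual_par T)" by simp
    show "ev (CC A) = ev (dual_par A)" by simp
    show "pol (CC T) = pol (dual_par T)" by simp
    show "pol (CC A) = pol (dual_par A)" by simp
    show "rigid (CC T) (CC A) (cc_map l)" using rigid_CC[OF T lrig fe(1) lpol] .
    show "rigid (CC T) (CC A) (cc_map r)" using rigid_CC[OF T rrig fe(2) rpol] .
    show "is_es (CC A)" using is_es_CC[OF A] .
    show "is_es (CC T)" using is_es_CC[OF T] .
  qed
  have G2: "is_symmetry (dual_par A) (dual_par T) (cc_map l) (cc_map r) \<and> essp (dual_par A) (dual_par T) (cc_map l) (cc_map r) \<and>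
         sym_fam (dual_par T) (cc_map l) (cc_map r) = SG False"
  proof (rule essp_gen)
    show "\<And>x. config (dual_par T) x = cfgG False T x" using config_dual[OF T] by blast
    show "\<And>y. config (dual_par A) y = cfgG False A y" using config_dual[OF A] by blast
    show "ev (dual_par T) = ev (dual_par T)" by simp
    show "ev (dual_par A) = ev (dual_par A)" by simp
    show "pol (dual_par T) = pol (dual_par T)" by simp
    show "pol (dual_par A) = pol (dual_par A)" by simp
    show "rigid (dual_par T) (dual_par A) (cc_map l)" using rigid_dual[OF lrig] .
    show "rigid (dual_par T) (dual_par A) (cc_map r)" using rigid_dual[OF rrig] .
    show "is_es (dual_par A)" using is_es_dual[OF A] .
    show "is_es (dual_par T)" using is_es_dual[OF T] .
  qed
  have sfC: "sym_fam (CC T) (cc_map l) (cc_map r) = SG True" using G1 by blast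
  have sfD: "sym_fam (dual_par T) (cc_map l) (cc_map r) = SG False" using G2 by blast
  have idm: "esp_map (CC A) (dual_par A) (\<lambda>p. p)"
    unfolding esp_map_def es_map_def
  proof (intro conjI ballI allI impI)
    fix a assume "a \<in> ev (CC A)" then show "a \<in> ev (dual_par A)" by simp
  next
    fix x assume "config (CC A) x"
    then have "cfgG False A x" using config_CC[OF A] cfgG_True_False by blast
    then show "config (dual_par A) ((\<lambda>p. p) ` x)" using config_dual[OF A] by simp
  next
    fix x show "inj_on (\<lambda>p. p) x" by simp
  next
    fix a show "pol (dual_par A) a = pol (CC A) a" by simp
  qed
  have imgsub: "\<forall>\<theta>\<in>sym_fam (CC T) (cc_map l) (cc_map r). image_rel (\<lambda>p. p) \<theta> \<in> sym_fam (dual_par T) (cc_map l) (cc_map r)"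
  proof
    fix \<theta> assume "\<theta> \<in> sym_fam (CC T) (cc_map l) (cc_map r)"
    then obtain x where x: "cfgG True T x" "\<theta> = imgC l r x" using sfC SG_iff by auto
    have "image_rel (\<lambda>p. p) \<theta> = \<theta>" unfolding image_rel_def by force
    then show "image_rel (\<lambda>p. p) \<theta> \<in> sym_fam (dual_par T) (cc_map l) (cc_map r)"
      using sfD SG_iff x cfgG_True_False by metis
  qed
  have ess_map: "essp_map (CC A) (CC T) (cc_map l) (cc_map r) (dual_par A) (dual_par T) (cc_map l) (cc_map r) (\<lambda>p. p)"
    unfolding essp_map_def using G1 G2 idm imgsub by blast
  have str: "sim_strategy (CC A) (CC T) (cc_map l) (cc_map r) (dual_par A) (dual_par T) (cc_map l) (cc_map r) (\<lambda>p. p)"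
    unfolding sim_strategy_def
  proof (intro conjI)
    show "essp_map (CC A) (CC T) (cc_map l) (cc_map r) (dual_par A) (dual_par T) (cc_map l) (cc_map r) (\<lambda>p. p)"
      by (rule ess_map)
    show "courteous (CC A) (dual_par A) (\<lambda>p. p)" by (rule courteous_CC[OF A])
    show "strong_receptive (dual_par A) (sym_fam (CC T) (cc_map l) (cc_map r)) (sym_fam (dual_par T) (cc_map l) (cc_map r)) (\<lambda>p. p)"
      unfolding sfC sfD by (rule strong_rec)
    show "thin_wrt (pol (CC A)) (CC A) (sym_fam (CC T) (cc_map l) (cc_map r))"
      unfolding sfC CC_pol by (rule thin_SG)
  qed
  show ?thesis using G1 str by blast
qed



end
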